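(* There exists $y\in H^N(\mathbb P^N,\Omega^{ch}_{\mathbb P^N})$ such that $d_-(y)\in H^0(\mathbb P^N,\Omega^{ch}_{\mathbb P^N})$ equals the class of the Virasoro element $L_{-2}e^0$.
   Context: Fix $N\ge1$. $L$ is the free abelian group with basis $A^1,\dots,A^N,B^1,\dots,B^N$, form $(A^i,B^j)=\delta_{ij}$, $(A^i,A^j)=(B^i,B^j)=0$; $L_A$ = span of the $A^i$. $V_L$ is the lattice vertex superalgebra of $L$ tensored with fermions (Fock modules over Heisenberg modes and odd modes $\Psi^i_j,\Phi^i_j$, $[\Psi^i_j,\Phi^k_l]_+=\delta_{ik}\delta_{j+l,0}$, generated from $e^\alpha$, $\alpha\in L$; $n$-th products $a_{(k)}b$). Let $\xi_i=A^i$ ($i\le N$), $\xi_{N+1}=-\sum_jA^j$, $\mathrm{ht}(\sum n_i\xi_i)=\sum n_i$ (unique expression, $n_i\ge0$, some $n_i=0$); $V_{L,q}$ is $V_L$ with products $a_{(k),q}b=q^{\mathrm{ht}(\alpha)+\mathrm{ht}(\alpha')-\mathrm{ht}(\alpha+\alpha')}a_{(k)}b$ ($A$-parts $\alpha,\alpha'$). Let $D=\big(\sum_{i=1}^N\Psi^i_{-1}(e^{A^i}-e^{-\sum_jA^j})\big)_{(0),q}$. Grade $V_L=\bigoplus_{n\ge0}V_L^n$ with $V_L^n$ spanned by vectors whose $A$-part has height $n$. Then $D=d_++q^Nd_-$ where $d_+$, $d_-$ are $q$-independent, $d_+(V_L^n)\subset V_L^{n+1}$, $d_-(V_L^n)\subset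 V_L^{n-N}$, and $d_+^2=d_-^2=[d_+,d_-]=0$; $d_+$ is the differential $D$ for $q=0$. By Borisov's theorem, $H_{d_+}(V_L)\cong H^*(\mathbb P^N,\Omega^{ch}_{\mathbb P^N})$, where $\Omega^{ch}$ is the chiral de Rham complex (a sheaf of conformal vertex superalgebras whose conformal weight zero part is the sheaf of differential forms), the height grading corresponding to cohomological degree. Hence $d_-$ induces a map $H^n(\mathbb P^N,\Omega^{ch}_{\mathbb P^N})\to H^{n-N}(\mathbb P^N,\Omega^{ch}_{\mathbb P^N})$. The Virasoro element is $L_{-2}e^0=\sum_i(B^i_{-1}A^i_{-1}+\Phi^i_{-1}\Psi^i_{-1})e^0\in V_L$, which is a $d_+$-cocycle representing the Virasoro element of $H^0(\mathbb P^N,\Omega^{ch}_{\mathbb P^N})$. *)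

theory Defs
  imports Complex_Main "HOL-Library.Multiset"
begin

text \<open>
Concrete model of the lattice vertex superalgebra V_L tensored with fermions.
Indices i of A^i, B^i, Psi^i, Phi^i are shifted to 0..N-1.

Basis vectors of V_L:  ((a,b), M, F)  meaning
   (ordered product of the fermionic creation modes in F, increasing w.r.t. vl_fless)
   * (commuting bosonic creation modes in the multiset M) * e^gamma,
   gamma = sum_i a i A^i + b i B^i.
Bosonic creation modes:  BA i m = A^i_{-(m+1)},  BB i m = B^i_{-(m+1)}.
Fermionic creation modes: FPsi i m = Psi^i_{-(m+1)},  FPhi i m = Phi^i_{-m}.
(Vacuum: Psi^i_j kills it for j >= 0, Phi^i_j for j >= 1.)
\<close>

datatype vl_bos = BA nat nat | BB nat nat
datatype vl_ferm = FPsi nat nat | FPhi nat nat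

type_synonym vl_lat = "(nat \<Rightarrow> int) \<times> (nat \<Rightarrow> int)"
type_synonym vl_basis = "vl_lat \<times> vl_bos multiset \<times> vl_ferm set"
type_synonym vl_vec = "vl_basis \<Rightarrow> complex"

fun vl_bidx :: "vl_bos \<Rightarrow> nat" where
  "vl_bidx (BA i m) = i" | "vl_bidx (BB i m) = i"
fun vl_bmode :: "vl_bos \<Rightarrow> nat" where
  "vl_bmode (BA i m) = m" | "vl_bmode (BB i m) = m"
fun vl_fidx :: "vl_ferm \<Rightarrow> nat" where
  "vl_fidx (FPsi i m) = i" | "vl_fidx (FPhi i m) = i"
fun vl_fmode :: "vl_ferm \<Rightarrow> nat" where
  "vl_fmode (FPsi i m) = m" | "vl_fmode (FPhi i m) = m"
fun vl_fkind :: "vl_ferm \<Rightarrow> nat" where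
  "vl_fkind (FPhi i m) = 0" | "vl_fkind (FPsi i m) = 1"

definition vl_fless :: "vl_ferm \<Rightarrow> vl_ferm \<Rightarrow> bool" where
  "vl_fless x y \<longleftrightarrow> vl_fkind x < vl_fkind y \<or>
     (vl_fkind x = vl_fkind y \<and> (vl_fidx x < vl_fidx y \<or>
        (vl_fidx x = vl_fidx y \<and> vl_fmode x < vl_fmode y)))"

definition vl_valid :: "nat \<Rightarrow> vl_basis \<Rightarrow> bool" where
  "vl_valid N x \<longleftrightarrow>
     (\<forall>i\<ge>N. fst (fst x) i = 0 \<and> snd (fst x) i = 0) \<and>
     (\<forall>l\<in>#fst (snd x). vl_bidx l < N) \<and>
     finite (snd (snd x)) \<and> (\<forall>f\<in>snd (snd x). vl_fidx f < N)"

definition VL :: "nat \<Rightarrow> vl_vec set" where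
  "VL N = {v. finite {x. v x \<noteq> 0} \<and> (\<forall>x. v x \<noteq> 0 \<longrightarrow> vl_valid N x)}"

text \<open>Height of an element sum_i a i A^i of L_A, exactly as in the paper:
  xi_{i+1} = A^{i+1} (i < N), xi_{N+1} = - sum_j A^j (coefficient n N),
  unique expression with n_i >= 0 and some n_i = 0.\<close>
definition vl_ht :: "nat \<Rightarrow> (nat \<Rightarrow> int) \<Rightarrow> nat" where
  "vl_ht N a = (THE h. \<exists>n::nat \<Rightarrow> nat. (\<exists>i\<le>N. n i = 0) \<and>
       (\<forall>i<N. a i = int (n i) - int (n N)) \<and> h = (\<Sum>i\<le>N. n i))"

definition VLgr :: "nat \<Rightarrow> int \<Rightarrow> vl_vec set" where
  "VLgr N n = {v \<in> VL N. \<forall>x. v x \<noteq> 0 \<longrightarrow> int (vl_ht N (fst (fst x))) = n}"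

definition vl_single :: "vl_basis \<Rightarrow> vl_vec" where
  "vl_single b = (\<lambda>y. if y = b then 1 else 0)"

definition vl_lin :: "(vl_basis \<Rightarrow> vl_vec) \<Rightarrow> vl_vec \<Rightarrow> vl_vec" where
  "vl_lin f v = (\<lambda>y. \<Sum>x\<in>{x. v x \<noteq> 0}. v x * f x y)"

definition vl_psi :: "nat \<Rightarrow> int \<Rightarrow> vl_basis \<Rightarrow> vl_vec" where
  "vl_psi i J x = (case x of (g, M, F) \<Rightarrow>
     if J < 0 then
       (let f = FPsi i (nat (- J - 1)) in
        if f \<in> F then (\<lambda>_. 0)
        else (\<lambda>y. (-1) ^ card {z\<in>F. vl_fless z f} * vl_single (g, M, insert f F) y))
     else
       (let f = FPhi i (nat J) in
        if f \<in> F then (\<lambda>y. (-1) ^ card {z\<in>F. vl_fless z f} * vl_single (g, M, F - {f}) y)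
        else (\<lambda>_. 0)))"

definition vl_wdeg :: "vl_bos multiset \<Rightarrow> nat" where
  "vl_wdeg M = sum_mset (image_mset (\<lambda>l. vl_bmode l + 1) M)"

text \<open>Coefficient of the monomial M2 in E^-(beta,z) = exp(sum_{n>0} beta_{-n} z^n / n),
  beta = sum_j c j A^j.\<close>
definition vl_coefE :: "(nat \<Rightarrow> int) \<Rightarrow> vl_bos multiset \<Rightarrow> complex" where
  "vl_coefE c M2 = (\<Prod>l\<in>set_mset M2. (case l of
      BA j m \<Rightarrow> (of_int (c j) / of_nat (m + 1)) ^ count M2 l / fact (count M2 l)
    | BB j m \<Rightarrow> 0))"

text \<open>E^+(beta,z) = exp(- sum_{n>0} beta_n z^{-n} / n) acts on polynomials by
  B^j_{-n} |-> B^j_{-n} - c j z^{-n}; coefficient of removing the sub-multiset M1 of M.\<close>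
definition vl_coefT :: "(nat \<Rightarrow> int) \<Rightarrow> vl_bos multiset \<Rightarrow> vl_bos multiset \<Rightarrow> complex" where
  "vl_coefT c M M1 = (if M1 \<subseteq># M then (\<Prod>l\<in>set_mset M1. (case l of
      BB j m \<Rightarrow> of_nat (count M l choose count M1 l) * (- of_int (c j)) ^ count M1 l
    | BA j m \<Rightarrow> 0)) else 0)"

text \<open>One term of the residue of Psi^i(z) Y(e^beta, z) on a basis vector
  (lattice cocycle chosen trivial on L_A x L, a valid choice for this even lattice).\<close>
definition vl_ztm :: "nat \<Rightarrow> (nat \<Rightarrow> int) \<Rightarrow> nat \<Rightarrow> vl_basis \<Rightarrow>
                       vl_bos multiset \<times> vl_bos multiset \<Rightarrow> vl_vec" where
  "vl_ztm N c i x p = (case x of ((a, b), M, F) \<Rightarrow> case p of (M2, M1) \<Rightarrow>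
     (let k = (\<Sum>j<N. c j * b j);
          J = k + int (vl_wdeg M2) - int (vl_wdeg M1);
          x' = ((\<lambda>j. a j + c j, b), M - M1 + M2, F)
      in (\<lambda>y. vl_coefE c M2 * vl_coefT c M M1 * vl_psi i J x' y)))"

text \<open>(Psi^i_{-1} e^beta)_{(0)} on a basis vector: the z^{-1} coefficient
  (the sum is finite; it is taken over the support of the terms).\<close>
definition vl_zero_mode :: "nat \<Rightarrow> (nat \<Rightarrow> int) \<Rightarrow> nat \<Rightarrow> vl_basis \<Rightarrow> vl_vec" where
  "vl_zero_mode N c i x =
     (\<lambda>y. \<Sum>p\<in>{p. vl_ztm N c i x p \<noteq> (\<lambda>_. 0)}. vl_ztm N c i x p y)"

definition vl_cA :: "nat \<Rightarrow> nat \<Rightarrow> int" where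
  "vl_cA i = (\<lambda>j. if j = i then 1 else 0)"
definition vl_cNeg :: "nat \<Rightarrow> nat \<Rightarrow> int" where
  "vl_cNeg N = (\<lambda>j. if j < N then -1 else 0)"

definition vl_qexp :: "nat \<Rightarrow> (nat \<Rightarrow> int) \<Rightarrow> (nat \<Rightarrow> int) \<Rightarrow> nat" where
  "vl_qexp N a a' = vl_ht N a + vl_ht N a' - vl_ht N (\<lambda>j. a j + a' j)"

definition vl_Dq_basis :: "nat \<Rightarrow> complex \<Rightarrow> vl_basis \<Rightarrow> vl_vec" where
  "vl_Dq_basis N q x = (\<lambda>y. \<Sum>i<N.
       q ^ vl_qexp N (vl_cA i) (fst (fst x)) * vl_zero_mode N (vl_cA i) i x y
     - q ^ vl_qexp N (vl_cNeg N) (fst (fst x)) * vl_zero_mode N (vl_cNeg N) i x y)"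

definition vl_Dq :: "nat \<Rightarrow> complex \<Rightarrow> vl_vec \<Rightarrow> vl_vec" where
  "vl_Dq N q v = vl_lin (vl_Dq_basis N q) v"

text \<open>D = d_+ + q^N d_-: hence d_+ = D at q = 0 (0^0 = 1) and d_- = D at q = 1 minus d_+.\<close>
definition vl_dplus :: "nat \<Rightarrow> vl_vec \<Rightarrow> vl_vec" where
  "vl_dplus N v = vl_Dq N 0 v"
definition vl_dminus :: "nat \<Rightarrow> vl_vec \<Rightarrow> vl_vec" where
  "vl_dminus N v = (\<lambda>y. vl_Dq N 1 v y - vl_Dq N 0 v y)"

definition vl_vir :: "nat \<Rightarrow> vl_vec" where
  "vl_vir N = (\<lambda>y. \<Sum>i<N.
       vl_single ((\<lambda>_. 0, \<lambda>_. 0), {#BB i 0, BA i 0#}, {}) y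
     + vl_single ((\<lambda>_. 0, \<lambda>_. 0), {#}, {FPhi i 1, FPsi i 0}) y)"

end

theory Submission
  imports Defs
begin


lemma wdeg_empty[simp]: "vl_wdeg {#} = 0" by (simp add: vl_wdeg_def)
lemma wdeg_add[simp]: "vl_wdeg (add_mset l M) = vl_bmode l + 1 + vl_wdeg M" by (simp add: vl_wdeg_def)
lemma wdeg_zero: "vl_wdeg M = 0 \<Longrightarrow> M = {#}" by (cases M) auto

definition AS0 :: "nat \<Rightarrow> vl_bos multiset set" where
 "AS0 N = {{#}} \<union> (\<lambda>n. {#BA n 0#}) ` {..<N} \<union> (\<lambda>n. {#BA n 1#}) ` {..<N}
          \<union> (\<lambda>(n,n'). {#BA n 0, BA n' 0#}) ` ({..<N} \<times> {..<N})"

lemma finite_AS0: "finite (AS0 N)" by (simp add: AS0_def)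

lemma AS0_char:
  assumes h1: "\<forall>l\<in>#M. \<exists>n m. l = BA n m \<and> n < N" and h2: "vl_wdeg M \<le> 2"
  shows "M \<in> AS0 N"
proof (cases M)
  case empty thus ?thesis by (simp add: AS0_def)
next
  case (add l1 M1)
  note add1 = add
  then obtain n1 m1 where l1: "l1 = BA n1 m1" "n1 < N" using h1 by auto
  show ?thesis
  proof (cases M1)
    case empty
    then have "m1 < 2" using h2 add l1 by simp
    then have "m1 = 0 \<or> m1 = 1" by auto
    thus ?thesis using add empty l1 by (auto simp: AS0_def)
  next
    case (add l2 M2)
    note add2 = add
    obtain n2 m2 where l2: "l2 = BA n2 m2" "n2 < N" using h1 add1 add2 by auto
    have w: "m1 + 1 + (m2 + 1 + vl_wdeg M2) \<le> 2" using h2 add1 add2 l1 l2 by simp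
    then have "m1 = 0" "m2 = 0" "vl_wdeg M2 = 0" by auto
    then have "M2 = {#}" using wdeg_zero by blast
    then have "M = (\<lambda>(n,n'). {#BA n 0, BA n' 0#}) (n1, n2)"
      using add1 add2 l1 l2 \<open>m1 = 0\<close> \<open>m2 = 0\<close> by simp
    then show ?thesis using l1 l2 unfolding AS0_def by blast
  qed
qed

lemma coefE_empty[simp]: "vl_coefE c {#} = 1" by (simp add: vl_coefE_def)
lemma coefE_single0: "vl_coefE c {#BA n 0#} = of_int (c n)" by (simp add: vl_coefE_def)
lemma coefE_single1: "vl_coefE c {#BA n 1#} = of_int (c n) / 2" by (simp add: vl_coefE_def)
lemma coefE_pair: "vl_coefE c {#BA n 0, BA n' 0#} =
   (if n = n' then of_int (c n) ^ 2 / 2 else of_int (c n) * of_int (c n'))"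
proof (cases "n = n'")
  case True
  then show ?thesis by (simp add: vl_coefE_def numeral_2_eq_2)
next
  case False
  then have "set_mset {#BA n 0, BA n' 0#} = {BA n 0, BA n' 0}" by auto
  then show ?thesis using False by (simp add: vl_coefE_def)
qed

lemma pair_eq_iff: "({#BA x 0, BA y 0#} = {#BA a 0, BA b 0#}) \<longleftrightarrow> (x = a \<and> y = b \<or> x = b \<and> y = a)"
  by (auto simp: add_eq_conv_ex)

lemma sum_pairs:
  fixes G :: "vl_bos multiset \<Rightarrow> complex"
  shows "(\<Sum>M\<in>(\<lambda>(n,n'). {#BA n 0, BA n' 0#}) ` ({..<N} \<times> {..<N}). vl_coefE c M * G M)
       = (\<Sum>n<N. \<Sum>n'<N. of_int (c n) * of_int (c n') / 2 * G {#BA n 0, BA n' 0#})"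
proof -
  let ?f = "\<lambda>(n,n'). {#BA n 0, BA n' 0#}"
  let ?X = "{..<N} \<times> {..<N}"
  let ?h = "\<lambda>(n,n'). of_int (c n) * of_int (c n') / 2 * G {#BA n 0, BA n' 0#} :: complex"
  have "(\<Sum>n<N. \<Sum>n'<N. of_int (c n) * of_int (c n') / 2 * G {#BA n 0, BA n' 0#}) = (\<Sum>p\<in>?X. ?h p)"
    by (simp add: sum.cartesian_product)
  also have "\<dots> = (\<Sum>M\<in>?f ` ?X. \<Sum>p\<in>{p\<in>?X. ?f p = M}. ?h p)"
    by (rule sum.image_gen) simp
  also have "\<dots> = (\<Sum>M\<in>?f ` ?X. vl_coefE c M * G M)"
  proof (rule sum.cong[OF refl])
    fix M assume "M \<in> ?f ` ?X"
    then obtain a b where ab: "a < N" "b < N" "M = {#BA a 0, BA b 0#}" by auto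
    show "(\<Sum>p\<in>{p\<in>?X. ?f p = M}. ?h p) = vl_coefE c M * G M"
    proof (cases "a = b")
      case True
      then have "{p\<in>?X. ?f p = M} = {(a,a)}" using ab by (auto simp: pair_eq_iff)
      then show ?thesis using True ab by (simp add: coefE_pair power2_eq_square)
    next
      case False
      then have "{p\<in>?X. ?f p = M} = {(a,b),(b,a)}" using ab by (auto simp: pair_eq_iff)
      then show ?thesis using False ab by (simp add: coefE_pair field_simps add_mset_commute)
    qed
  qed
  finally show ?thesis by simp
qed

lemma sum_AS0:
  fixes G :: "vl_bos multiset \<Rightarrow> complex"
  shows "(\<Sum>M\<in>AS0 N. vl_coefE c M * G M) = G {#} + (\<Sum>n<N. of_int (c n) * G {#BA n 0#})
     + (\<Sum>n<N. of_int (c n) / 2 * G {#BA n 1#})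
     + (\<Sum>n<N. \<Sum>n'<N. of_int (c n) * of_int (c n') / 2 * G {#BA n 0, BA n' 0#})"
proof -
  let ?S1 = "{{#}} :: vl_bos multiset set"
  let ?S2 = "(\<lambda>n. {#BA n 0#}) ` {..<N}"
  let ?S3 = "(\<lambda>n. {#BA n 1#}) ` {..<N}"
  let ?S4 = "(\<lambda>(n,n'). {#BA n 0, BA n' 0#}) ` ({..<N} \<times> {..<N})"
  let ?g = "\<lambda>M. vl_coefE c M * G M"
  have d1: "?S1 \<inter> ?S2 = {}" by auto
  have d2: "(?S1 \<union> ?S2) \<inter> ?S3 = {}" by auto
  have d3: "(?S1 \<union> ?S2 \<union> ?S3) \<inter> ?S4 = {}" by auto
  have "sum ?g (AS0 N) = sum ?g (?S1 \<union> ?S2 \<union> ?S3) + sum ?g ?S4"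
    unfolding AS0_def by (rule sum.union_disjoint) (use d3 in auto)
  also have "sum ?g (?S1 \<union> ?S2 \<union> ?S3) = sum ?g (?S1 \<union> ?S2) + sum ?g ?S3"
    by (rule sum.union_disjoint) (use d2 in auto)
  also have "sum ?g (?S1 \<union> ?S2) = sum ?g ?S1 + sum ?g ?S2"
    by (rule sum.union_disjoint) (use d1 in auto)
  also have "sum ?g ?S2 = (\<Sum>n<N. of_int (c n) * G {#BA n 0#})"
    by (subst sum.reindex) (auto simp: inj_on_def coefE_single0)
  also have "sum ?g ?S3 = (\<Sum>n<N. of_int (c n) / 2 * G {#BA n 1#})"
    by (subst sum.reindex) (auto simp: inj_on_def vl_coefE_def)
  also have "sum ?g ?S4 = (\<Sum>n<N. \<Sum>n'<N. of_int (c n) * of_int (c n') / 2 * G {#BA n 0, BA n' 0#})"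
    by (rule sum_pairs)
  finally show ?thesis by simp
qed


lemma zm_superset:
  assumes "finite S" "\<And>p. vl_ztm N c i x p \<noteq> (\<lambda>_. 0) \<Longrightarrow> p \<in> S"
  shows "vl_zero_mode N c i x y = (\<Sum>p\<in>S. vl_ztm N c i x p y)"
  unfolding vl_zero_mode_def
  by (rule sum.mono_neutral_left) (use assms in auto)

lemma ztm_eq:
  assumes hk: "(\<Sum>j<N. c j * b j) = 0"
  shows "vl_ztm N c i ((a,b),M,F) (M2, M1) = (\<lambda>y. vl_coefE c M2 * vl_coefT c M M1 *
     vl_psi i (int (vl_wdeg M2) - int (vl_wdeg M1)) ((\<lambda>j. a j + c j, b), M - M1 + M2, F) y)"
  unfolding vl_ztm_def using hk by (simp add: Let_def)

lemma coefE_nz: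
  assumes "vl_coefE c M2 \<noteq> 0"
  shows "\<forall>l\<in>#M2. \<exists>n m. l = BA n m \<and> c n \<noteq> 0"
proof
  fix l assume l: "l \<in># M2"
  have fin: "finite (set_mset M2)" by simp
  have "\<forall>l\<in>set_mset M2. (case l of
      BA j m \<Rightarrow> (of_int (c j) / of_nat (m + 1)) ^ count M2 l / fact (count M2 l)
    | BB j m \<Rightarrow> 0) \<noteq> (0::complex)"
    using assms unfolding vl_coefE_def using prod_zero_iff[OF fin] by blast
  then have h: "(case l of
      BA j m \<Rightarrow> (of_int (c j) / of_nat (m + 1)) ^ count M2 l / fact (count M2 l)
    | BB j m \<Rightarrow> 0) \<noteq> (0::complex)" using l by blast
  have cnt: "count M2 l \<noteq> 0" using l by simp
  show "\<exists>n m. l = BA n m \<and> c n \<noteq> 0"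
  proof (cases l)
    case (BA n m)
    then show ?thesis using h cnt by auto
  next
    case (BB n m)
    then show ?thesis using h by simp
  qed
qed

lemma coefT_nz:
  assumes "vl_coefT c M M1 \<noteq> 0"
  shows "M1 \<subseteq># M \<and> (\<forall>l\<in>#M1. \<exists>j m. l = BB j m \<and> c j \<noteq> 0)"
proof -
  have sub: "M1 \<subseteq># M" using assms unfolding vl_coefT_def by (auto split: if_splits)
  have fin: "finite (set_mset M1)" by simp
  have "\<forall>l\<in>set_mset M1. (case l of
      BB j m \<Rightarrow> of_nat (count M l choose count M1 l) * (- of_int (c j)) ^ count M1 l
    | BA j m \<Rightarrow> 0) \<noteq> (0::complex)"
    using assms sub unfolding vl_coefT_def using prod_zero_iff[OF fin] by auto
  moreover have "\<And>l. l \<in># M1 \<Longrightarrow> (case l of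
      BB j m \<Rightarrow> of_nat (count M l choose count M1 l) * (- of_int (c j)) ^ count M1 l
    | BA j m \<Rightarrow> 0) \<noteq> (0::complex) \<Longrightarrow> \<exists>j m. l = BB j m \<and> c j \<noteq> 0"
  proof -
    fix l assume l: "l \<in># M1" and h: "(case l of
      BB j m \<Rightarrow> of_nat (count M l choose count M1 l) * (- of_int (c j)) ^ count M1 l
    | BA j m \<Rightarrow> 0) \<noteq> (0::complex)"
    have cnt: "count M1 l \<noteq> 0" using l by simp
    show "\<exists>j m. l = BB j m \<and> c j \<noteq> 0"
    proof (cases l)
      case (BA n m) then show ?thesis using h by simp
    next
      case (BB n m) then show ?thesis using h cnt by auto
    qed
  qed
  ultimately show ?thesis using sub by blast
qed

lemma psi_nz:
  assumes "vl_psi i J x \<noteq> (\<lambda>_. 0)"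
  shows "J < 0 \<or> (J \<ge> 0 \<and> FPhi i (nat J) \<in> snd (snd x))"
  using assms unfolding vl_psi_def by (auto simp: Let_def split: prod.splits if_splits)

lemma ztm_support:
  assumes hk: "(\<Sum>j<N. c j * b j) = 0"
   and hc: "\<forall>n. c n \<noteq> 0 \<longrightarrow> n < N"
   and hF: "\<forall>m\<ge>2. FPhi i m \<notin> F"
   and hM1: "\<And>M1. M1 \<subseteq># M \<Longrightarrow> \<forall>l\<in>#M1. \<exists>j m. l = BB j m \<and> c j \<noteq> 0 \<Longrightarrow> M1 \<in> M1s"
   and hw: "\<forall>M1\<in>M1s. vl_wdeg M1 \<le> 1"
   and nz: "vl_ztm N c i ((a,b),M,F) (M2, M1) \<noteq> (\<lambda>_. 0)"
  shows "M2 \<in> AS0 N \<and> M1 \<in> M1s"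
proof -
  let ?J = "int (vl_wdeg M2) - int (vl_wdeg M1)"
  let ?x = "((\<lambda>j. a j + c j, b), M - M1 + M2, F)"
  have nz2: "(\<lambda>y. vl_coefE c M2 * vl_coefT c M M1 * vl_psi i ?J ?x y) \<noteq> (\<lambda>_. 0)"
    using nz ztm_eq[OF hk] by metis
  have e: "vl_coefE c M2 \<noteq> 0" using nz2 by auto
  have t: "vl_coefT c M M1 \<noteq> 0" using nz2 by auto
  have p: "vl_psi i ?J ?x \<noteq> (\<lambda>_. 0)" using nz2 by auto
  have M1in: "M1 \<in> M1s" using coefT_nz[OF t] hM1 by blast
  have w1: "vl_wdeg M1 \<le> 1" using hw M1in by blast
  have J: "?J \<le> 1"
  proof -
    have "?J < 0 \<or> (?J \<ge> 0 \<and> FPhi i (nat ?J) \<in> F)" using psi_nz[OF p] by simp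
    then show ?thesis
    proof
      assume "?J < 0" then show ?thesis by simp
    next
      assume h: "?J \<ge> 0 \<and> FPhi i (nat ?J) \<in> F"
      then have "nat ?J < 2" using hF by (meson not_le)
      then show ?thesis using h by linarith
    qed
  qed
  have "vl_wdeg M2 \<le> 2" using J w1 by linarith
  moreover have "\<forall>l\<in>#M2. \<exists>n m. l = BA n m \<and> n < N" using coefE_nz[OF e] hc by blast
  ultimately have "M2 \<in> AS0 N" using AS0_char by blast
  then show ?thesis using M1in by blast
qed

lemma zm_master:
  assumes hk: "(\<Sum>j<N. c j * b j) = 0"
   and hc: "\<forall>n. c n \<noteq> 0 \<longrightarrow> n < N"
   and hF: "\<forall>m\<ge>2. FPhi i m \<notin> F"
   and hM1: "\<And>M1. M1 \<subseteq># M \<Longrightarrow> \<forall>l\<in>#M1. \<exists>j m. l = BB j m \<and> c j \<noteq> 0 \<Longrightarrow> M1 \<in> M1s"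
   and hw: "\<forall>M1\<in>M1s. vl_wdeg M1 \<le> 1"
   and fin: "finite M1s"
  shows "vl_zero_mode N c i ((a,b),M,F) y = (\<Sum>M1\<in>M1s. vl_coefT c M M1 * (
      vl_psi i (- int (vl_wdeg M1)) ((\<lambda>j. a j + c j, b), M - M1, F) y
    + (\<Sum>n<N. of_int (c n) * vl_psi i (1 - int (vl_wdeg M1)) ((\<lambda>j. a j + c j, b), add_mset (BA n 0) (M - M1), F) y)
    + (\<Sum>n<N. of_int (c n) / 2 * vl_psi i (2 - int (vl_wdeg M1)) ((\<lambda>j. a j + c j, b), add_mset (BA n 1) (M - M1), F) y)
    + (\<Sum>n<N. \<Sum>n'<N. of_int (c n) * of_int (c n') / 2 *
         vl_psi i (2 - int (vl_wdeg M1)) ((\<lambda>j. a j + c j, b), add_mset (BA n 0) (add_mset (BA n' 0) (M - M1)), F) y)))"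
proof -
  have "vl_zero_mode N c i ((a,b),M,F) y = (\<Sum>p\<in>AS0 N \<times> M1s. vl_ztm N c i ((a,b),M,F) p y)"
  proof (rule zm_superset)
    show "finite (AS0 N \<times> M1s)" using finite_AS0 fin by simp
  next
    fix p assume "vl_ztm N c i ((a,b),M,F) p \<noteq> (\<lambda>_. 0)"
    then show "p \<in> AS0 N \<times> M1s"
      using ztm_support[OF hk hc hF hM1 hw] by (cases p) blast
  qed
  also have "\<dots> = (\<Sum>M1\<in>M1s. \<Sum>M2\<in>AS0 N. vl_coefE c M2 * (vl_coefT c M M1 *
     vl_psi i (int (vl_wdeg M2) - int (vl_wdeg M1)) ((\<lambda>j. a j + c j, b), M - M1 + M2, F) y))"
  proof -
    have "(\<Sum>p\<in>AS0 N \<times> M1s. vl_ztm N c i ((a,b),M,F) p y) = (\<Sum>p\<in>AS0 N \<times> M1s. (\<lambda>(M2,M1). vl_coefE c M2 * (vl_coefT c M M1 *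
     vl_psi i (int (vl_wdeg M2) - int (vl_wdeg M1)) ((\<lambda>j. a j + c j, b), M - M1 + M2, F) y)) p)"
      by (rule sum.cong) (auto simp: ztm_eq[OF hk] mult.assoc)
    also have "\<dots> = (\<Sum>M2\<in>AS0 N. \<Sum>M1\<in>M1s. vl_coefE c M2 * (vl_coefT c M M1 *
     vl_psi i (int (vl_wdeg M2) - int (vl_wdeg M1)) ((\<lambda>j. a j + c j, b), M - M1 + M2, F) y))"
      by (simp add: sum.cartesian_product)
    also have "\<dots> = (\<Sum>M1\<in>M1s. \<Sum>M2\<in>AS0 N. vl_coefE c M2 * (vl_coefT c M M1 *
     vl_psi i (int (vl_wdeg M2) - int (vl_wdeg M1)) ((\<lambda>j. a j + c j, b), M - M1 + M2, F) y))"
      by (rule sum.swap)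
    finally show ?thesis .
  qed
  also have "\<dots> = (\<Sum>M1\<in>M1s. vl_coefT c M M1 * (
      vl_psi i (- int (vl_wdeg M1)) ((\<lambda>j. a j + c j, b), M - M1, F) y
    + (\<Sum>n<N. of_int (c n) * vl_psi i (1 - int (vl_wdeg M1)) ((\<lambda>j. a j + c j, b), add_mset (BA n 0) (M - M1), F) y)
    + (\<Sum>n<N. of_int (c n) / 2 * vl_psi i (2 - int (vl_wdeg M1)) ((\<lambda>j. a j + c j, b), add_mset (BA n 1) (M - M1), F) y)
    + (\<Sum>n<N. \<Sum>n'<N. of_int (c n) * of_int (c n') / 2 *
         vl_psi i (2 - int (vl_wdeg M1)) ((\<lambda>j. a j + c j, b), add_mset (BA n 0) (add_mset (BA n' 0) (M - M1)), F) y)))"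
  proof (rule sum.cong[OF refl])
    fix M1
    show "(\<Sum>M2\<in>AS0 N. vl_coefE c M2 * (vl_coefT c M M1 *
     vl_psi i (int (vl_wdeg M2) - int (vl_wdeg M1)) ((\<lambda>j. a j + c j, b), M - M1 + M2, F) y)) = vl_coefT c M M1 * (
      vl_psi i (- int (vl_wdeg M1)) ((\<lambda>j. a j + c j, b), M - M1, F) y
    + (\<Sum>n<N. of_int (c n) * vl_psi i (1 - int (vl_wdeg M1)) ((\<lambda>j. a j + c j, b), add_mset (BA n 0) (M - M1), F) y)
    + (\<Sum>n<N. of_int (c n) / 2 * vl_psi i (2 - int (vl_wdeg M1)) ((\<lambda>j. a j + c j, b), add_mset (BA n 1) (M - M1), F) y)
    + (\<Sum>n<N. \<Sum>n'<N. of_int (c n) * of_int (c n') / 2 *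
         vl_psi i (2 - int (vl_wdeg M1)) ((\<lambda>j. a j + c j, b), add_mset (BA n 0) (add_mset (BA n' 0) (M - M1)), F) y))"
      by (subst sum_AS0) (simp add: sum_distrib_left algebra_simps)
  qed
  finally show ?thesis .
qed


lemma psi_zero_notin: "0 \<le> J \<Longrightarrow> FPhi i (nat J) \<notin> F \<Longrightarrow> vl_psi i J (g,M,F) = (\<lambda>_. 0)"
  unfolding vl_psi_def by (auto simp: Let_def)

lemma psi_phi: "vl_psi i (int m) (g,M,F) = (if FPhi i m \<in> F then
   (\<lambda>y. (-1) ^ card {z\<in>F. vl_fless z (FPhi i m)} * vl_single (g,M,F - {FPhi i m}) y) else (\<lambda>_. 0))"
  unfolding vl_psi_def by (auto simp: Let_def)

lemma psi_phi0: "vl_psi i 0 (g,M,F) = (if FPhi i 0 \<in> F then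
   (\<lambda>y. (-1) ^ card {z\<in>F. vl_fless z (FPhi i 0)} * vl_single (g,M,F - {FPhi i 0}) y) else (\<lambda>_. 0))"
  using psi_phi[of i 0] by simp

lemma psi_phi1: "vl_psi i 1 (g,M,F) = (if FPhi i 1 \<in> F then
   (\<lambda>y. (-1) ^ card {z\<in>F. vl_fless z (FPhi i 1)} * vl_single (g,M,F - {FPhi i 1}) y) else (\<lambda>_. 0))"
  using psi_phi[of i 1] by simp

lemma psi_psi: "vl_psi i (-1) (g,M,F) = (if FPsi i 0 \<in> F then (\<lambda>_. 0) else
   (\<lambda>y. (-1) ^ card {z\<in>F. vl_fless z (FPsi i 0)} * vl_single (g,M,insert (FPsi i 0) F) y))"
  unfolding vl_psi_def by (auto simp: Let_def)

lemma zm_noB: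
  assumes hk: "(\<Sum>j<N. c j * b j) = 0"
   and hc: "\<forall>n. c n \<noteq> 0 \<longrightarrow> n < N"
   and hF: "\<forall>m\<ge>2. FPhi i m \<notin> F"
   and noB: "\<forall>l\<in>#M. \<forall>j m. l \<noteq> BB j m"
  shows "vl_zero_mode N c i ((a,b),M,F) y = vl_psi i 0 ((\<lambda>j. a j + c j, b), M, F) y
     + (\<Sum>n<N. of_int (c n) * vl_psi i 1 ((\<lambda>j. a j + c j, b), add_mset (BA n 0) M, F) y)"
proof -
  have hM1: "\<And>M1. M1 \<subseteq># M \<Longrightarrow> \<forall>l\<in>#M1. \<exists>j m. l = BB j m \<and> c j \<noteq> 0 \<Longrightarrow> M1 \<in> {{#}}"
  proof -
    fix M1 assume s: "M1 \<subseteq># M" and h: "\<forall>l\<in>#M1. \<exists>j m. l = BB j m \<and> c j \<noteq> 0"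
    have "\<forall>l. l \<notin># M1"
    proof (intro allI notI)
      fix l assume "l \<in># M1"
      then have "l \<in># M" by (rule mset_subset_eqD[OF s])
      then show False using h noB \<open>l \<in># M1\<close> by blast
    qed
    then show "M1 \<in> {{#}}" by (cases M1) auto
  qed
  have p2: "\<And>g M'. vl_psi i 2 (g, M', F) = (\<lambda>_. 0)"
    by (rule psi_zero_notin) (use hF in auto)
  have ct: "vl_coefT c M {#} = 1" by (simp add: vl_coefT_def)
  show ?thesis
    by (subst zm_master[OF hk hc hF hM1]) (simp_all add: ct p2)
qed

lemma zm_oneB:
  assumes hk: "(\<Sum>j<N. c j * b j) = 0"
   and hc: "\<forall>n. c n \<noteq> 0 \<longrightarrow> n < N"
   and hF: "\<forall>m\<ge>2. FPhi i m \<notin> F"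
   and noB: "\<forall>l\<in>#M'. \<forall>j m. l \<noteq> BB j m"
  shows "vl_zero_mode N c i ((a,b),add_mset (BB j 0) M',F) y =
       vl_psi i 0 ((\<lambda>j. a j + c j, b), add_mset (BB j 0) M', F) y
     + (\<Sum>n<N. of_int (c n) * vl_psi i 1 ((\<lambda>j. a j + c j, b), add_mset (BA n 0) (add_mset (BB j 0) M'), F) y)
     - of_int (c j) * (vl_psi i (-1) ((\<lambda>j. a j + c j, b), M', F) y
       + (\<Sum>n<N. of_int (c n) * vl_psi i 0 ((\<lambda>j. a j + c j, b), add_mset (BA n 0) M', F) y)
       + (\<Sum>n<N. of_int (c n) / 2 * vl_psi i 1 ((\<lambda>j. a j + c j, b), add_mset (BA n 1) M', F) y)
       + (\<Sum>n<N. \<Sum>n'<N. of_int (c n) * of_int (c n') / 2 *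
             vl_psi i 1 ((\<lambda>j. a j + c j, b), add_mset (BA n 0) (add_mset (BA n' 0) M'), F) y))"
proof -
  let ?M = "add_mset (BB j 0) M'"
  have nin: "BB j 0 \<notin># M'" using noB by blast
  have hM1: "\<And>M1. M1 \<subseteq># ?M \<Longrightarrow> \<forall>l\<in>#M1. \<exists>j m. l = BB j m \<and> c j \<noteq> 0 \<Longrightarrow> M1 \<in> {{#}, {#BB j 0#}}"
  proof -
    fix M1 assume s: "M1 \<subseteq># ?M" and h: "\<forall>l\<in>#M1. \<exists>j m. l = BB j m \<and> c j \<noteq> 0"
    have sub1: "M1 \<subseteq># {#BB j 0#}"
      unfolding subseteq_mset_def
    proof
      fix l
      show "count M1 l \<le> count {#BB j 0#} l"
      proof (cases "l \<in># M1")
        case True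
        then have "l \<notin># M'" using h noB by blast
        then have "count M' l = 0" by (simp add: count_eq_zero_iff)
        moreover have "count M1 l \<le> count ?M l" using s by (simp add: subseteq_mset_def)
        ultimately show ?thesis by (auto split: if_splits)
      next
        case False then have "count M1 l = 0" by (simp add: count_eq_zero_iff)
        then show ?thesis by simp
      qed
    qed
    show "M1 \<in> {{#}, {#BB j 0#}}"
    proof (cases "M1 = {#}")
      case True then show ?thesis by simp
    next
      case False then show ?thesis using nonempty_subseteq_mset_eq_single[OF False sub1] by simp
    qed
  qed
  have p2: "\<And>g M''. vl_psi i 2 (g, M'', F) = (\<lambda>_. 0)"
    by (rule psi_zero_notin) (use hF in auto)
  have ct0: "vl_coefT c ?M {#} = 1" by (simp add: vl_coefT_def)
  have ct1: "vl_coefT c ?M {#BB j 0#} = - of_int (c j)"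
    using nin by (simp add: vl_coefT_def count_eq_zero_iff)
  have ne: "{#} \<noteq> {#BB j 0#}" by simp
  show ?thesis
    by (subst zm_master[OF hk hc hF hM1]) (simp_all add: ct0 ct1 p2 ne algebra_simps)
qed


definition g0 :: "nat \<Rightarrow> nat \<Rightarrow> int" where "g0 N = (\<lambda>j. if j < N then 1 else 0)"
definition gz :: "nat \<Rightarrow> int" where "gz = (\<lambda>_. 0)"

lemma fless_simps[simp]:
  "vl_fless (FPhi a m) (FPhi b m') \<longleftrightarrow> a < b \<or> (a = b \<and> m < m')"
  "vl_fless (FPsi a m) (FPsi b m') \<longleftrightarrow> a < b \<or> (a = b \<and> m < m')"
  "vl_fless (FPhi a m) (FPsi b m')"
  "\<not> vl_fless (FPsi a m) (FPhi b m')"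
  by (auto simp: vl_fless_def)

lemma filter_insert: "{z \<in> insert a A. P z} = (if P a then insert a {z \<in> A. P z} else {z \<in> A. P z})"
  by auto
lemma filter_empty: "{z \<in> {}. P z} = {}" by auto
lemma coll1[simp]: "{z. z = a \<and> P z} = (if P a then {a} else {})" by auto
lemma coll2[simp]: "{z. (z = a \<or> Q z) \<and> P z} = (if P a then insert a {z. Q z \<and> P z} else {z. Q z \<and> P z})" by auto

lemma of_int_cA: "(of_int (vl_cA i n) :: complex) = (if n = i then 1 else 0)"
  by (simp add: vl_cA_def)
lemma of_int_cNeg: "n < N \<Longrightarrow> (of_int (vl_cNeg N n) :: complex) = -1"
  by (simp add: vl_cNeg_def)

lemma sum_cA: "i < N \<Longrightarrow> (\<Sum>n<N. of_int (vl_cA i n) * f n) = (f i :: complex)"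
proof -
  assume "i < N"
  have "\<And>n. of_int (vl_cA i n) * f n = (if n = i then f i else 0)" by (simp add: of_int_cA)
  then show ?thesis using \<open>i < N\<close> by simp
qed
lemma sum_cA2: "i < N \<Longrightarrow> (\<Sum>n<N. of_int (vl_cA i n) / 2 * f n) = (f i / 2 :: complex)"
proof -
  assume "i < N"
  have "\<And>n. of_int (vl_cA i n) / 2 * f n = (if n = i then f i / 2 else 0)" by (simp add: of_int_cA)
  then show ?thesis using \<open>i < N\<close> by simp
qed
lemma sum_cA_pair: "i < N \<Longrightarrow> (\<Sum>n<N. \<Sum>n'<N. of_int (vl_cA i n) * of_int (vl_cA i n') / 2 * f n n') = (f i i / 2 :: complex)"
proof -
  assume "i < N"
  have h: "\<And>n n'. of_int (vl_cA i n) * of_int (vl_cA i n') / 2 * f n n' = (if n = i then (if n' = i then f i i / 2 else 0) else 0)" by (simp add: of_int_cA)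
  have "(\<Sum>n<N. \<Sum>n'<N. of_int (vl_cA i n) * of_int (vl_cA i n') / 2 * f n n') = (\<Sum>n<N. \<Sum>n'<N. (if n = i then (if n' = i then f i i / 2 else 0) else 0))"
    by (simp only: h)
  also have "\<dots> = (\<Sum>n<N. (if n = i then f i i / 2 else 0))"
    by (rule sum.cong[OF refl]) (use \<open>i < N\<close> in simp)
  also have "\<dots> = f i i / 2" using \<open>i < N\<close> by simp
  finally show ?thesis .
qed
lemma sum_cNeg: "(\<Sum>n<N. of_int (vl_cNeg N n) * f n) = - (\<Sum>n<N. f n :: complex)"
  by (simp add: of_int_cNeg sum_negf)
lemma sum_cNeg2: "(\<Sum>n<N. of_int (vl_cNeg N n) / 2 * f n) = - (\<Sum>n<N. f n :: complex) / 2"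
  by (simp add: of_int_cNeg sum_negf sum_divide_distrib)
lemma sum_cNeg_pair: "(\<Sum>n<N. \<Sum>n'<N. of_int (vl_cNeg N n) * of_int (vl_cNeg N n') / 2 * f n n') = (\<Sum>n<N. \<Sum>n'<N. f n n' :: complex) / 2"
  by (simp add: of_int_cNeg sum_divide_distrib)

lemma hk0: "(\<Sum>j<N. c j * gz j) = 0" by (simp add: gz_def)
lemma hcA: "i < N \<Longrightarrow> \<forall>n. vl_cA i n \<noteq> 0 \<longrightarrow> n < N" by (simp add: vl_cA_def)
lemma hcNeg: "\<forall>n. vl_cNeg N n \<noteq> 0 \<longrightarrow> n < N" by (simp add: vl_cNeg_def)


definition b1 where "b1 N k j = ((g0 N, gz), {#BA k 0, BA j 0#}, {FPhi k 0})"
definition b2 where "b2 N k j = ((g0 N, gz), add_mset (BB j 0) {#BA k 0#}, {FPhi k 0})"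
definition b3 where "b3 N k = ((g0 N, gz), {#BA k 1#}, {FPhi k 0})"
definition b4 where "b4 N k j = ((g0 N, gz), {#BB j 0#}, {FPhi k 1})"
definition b5 where "b5 N k j = ((g0 N, gz), {#BA j 0#}, {FPhi k 1})"
definition b6 where "b6 N k j = ((g0 N, gz), {#}, {FPhi k 0, FPhi j 1, FPsi k 0})"
definition b7 where "b7 N k j = ((g0 N, gz), {#BA k 0#}, {FPhi k 0, FPhi j 0, FPsi j 0})"

abbreviation Sg where "Sg N i M F v \<equiv> vl_single ((\<lambda>l. g0 N l + vl_cA i l, gz), M, F) v"

lemma cA1: "(of_int (vl_cA i n) :: complex) * x = (if n = i then x else 0)" by (simp add: vl_cA_def)
lemma cA2: "(of_int (vl_cA i n) :: complex) / 2 * x = (if n = i then x / 2 else 0)" by (simp add: vl_cA_def)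
lemma sum_if_const: "(\<Sum>x\<in>A. if P then f x else (0::complex)) = (if P then sum f A else 0)" by simp
lemma if_fun_app: "(if P then f else g) x = (if P then f x else g x)" by simp
lemma if10_mult: "(if P then (1::complex) else 0) * x = (if P then x else 0)" by simp
lemma if10_div_mult: "(if P then (1::complex) else 0) / 2 * x = (if P then x / 2 else 0)" by simp
lemma if0_div: "(if P then x else (0::complex)) / 2 = (if P then x / 2 else 0)" by simp
lemma if0_mult: "(if P then x else (0::complex)) * y = (if P then x * y else 0)" by simp

lemmas zsimps = sum_if_const One_nat_def cA1 cA2 if_fun_app if10_mult if10_div_mult if0_div if0_mult insert_Diff_if psi_phi0 psi_phi1[unfolded One_nat_def] psi_psi sum_cNeg sum_cNeg2 sum_cNeg_pair filter_insert filter_empty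

lemma Dp1: assumes "k < N" "j < N"
  shows "(\<Sum>i<N. vl_zero_mode N (vl_cA i) i (b1 N k j) v) = Sg N k {#BA k 0, BA j 0#} {} v"
proof -
  have "\<And>i. i < N \<Longrightarrow> vl_zero_mode N (vl_cA i) i (b1 N k j) v = (if i = k then Sg N k {#BA k 0, BA j 0#} {} v else 0)"
    unfolding b1_def by (subst zm_noB[OF hk0 hcA]) (auto simp: zsimps)
  then show ?thesis using assms by simp
qed

lemma Dp2: assumes "k < N" "j < N"
  shows "(\<Sum>i<N. vl_zero_mode N (vl_cA i) i (b2 N k j) v) = Sg N k (add_mset (BB j 0) {#BA k 0#}) {} v
     + Sg N j {#BA k 0#} {FPsi j 0, FPhi k 0} v - (if j = k then Sg N k {#BA k 0, BA k 0#} {} v else 0)"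
proof -
  have "\<And>i. i < N \<Longrightarrow> vl_zero_mode N (vl_cA i) i (b2 N k j) v = (if i = k then Sg N k (add_mset (BB j 0) {#BA k 0#}) {} v else 0)
     + (if j = i then Sg N i {#BA k 0#} {FPsi i 0, FPhi k 0} v else 0) - (if i = k then (if j = k then Sg N i {#BA i 0, BA k 0#} {} v else 0) else 0)"
    unfolding b2_def by (subst zm_oneB[OF hk0 hcA]) (auto simp: zsimps)
  then show ?thesis using assms by (simp add: sum.distrib sum_subtractf)
qed

lemma Dp3: assumes "k < N"
  shows "(\<Sum>i<N. vl_zero_mode N (vl_cA i) i (b3 N k) v) = Sg N k {#BA k 1#} {} v"
proof -
  have "\<And>i. i < N \<Longrightarrow> vl_zero_mode N (vl_cA i) i (b3 N k) v = (if i = k then Sg N k {#BA k 1#} {} v else 0)"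
    unfolding b3_def by (subst zm_noB[OF hk0 hcA]) (auto simp: zsimps)
  then show ?thesis using assms by simp
qed

lemma Dp4: assumes "k < N" "j < N"
  shows "(\<Sum>i<N. vl_zero_mode N (vl_cA i) i (b4 N k j) v) = Sg N k {#BA k 0, BB j 0#} {} v
     + Sg N j {#} {FPsi j 0, FPhi k 1} v - (if j = k then Sg N k {#BA k 1#} {} v / 2 + Sg N k {#BA k 0, BA k 0#} {} v / 2 else 0)"
proof -
  have "\<And>i. i < N \<Longrightarrow> vl_zero_mode N (vl_cA i) i (b4 N k j) v = (if i = k then Sg N k {#BA k 0, BB j 0#} {} v else 0)
     + (if j = i then Sg N i {#} {FPsi i 0, FPhi k 1} v else 0) - (if i = k then (if j = k then Sg N i {#BA i 1#} {} v / 2 + Sg N i {#BA i 0, BA i 0#} {} v / 2 else 0) else 0)"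
    unfolding b4_def by (subst zm_oneB[OF hk0 hcA]) (auto simp: zsimps cong: if_cong)
  then show ?thesis using assms by (simp add: sum.distrib sum_subtractf)
qed

lemma Dp5: assumes "k < N" "j < N"
  shows "(\<Sum>i<N. vl_zero_mode N (vl_cA i) i (b5 N k j) v) = Sg N k {#BA k 0, BA j 0#} {} v"
proof -
  have "\<And>i. i < N \<Longrightarrow> vl_zero_mode N (vl_cA i) i (b5 N k j) v = (if i = k then Sg N k {#BA k 0, BA j 0#} {} v else 0)"
    unfolding b5_def by (subst zm_noB[OF hk0 hcA]) (auto simp: zsimps)
  then show ?thesis using assms by simp
qed

lemma Dp6: assumes "k < N" "j < N"
  shows "(\<Sum>i<N. vl_zero_mode N (vl_cA i) i (b6 N k j) v) =
     (if j < k then -1 else 1) * Sg N k {#} {FPhi j 1, FPsi k 0} v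
   + (if k \<le> j then -1 else 1) * Sg N j {#BA j 0#} {FPhi k 0, FPsi k 0} v"
proof -
  have "\<And>i. i < N \<Longrightarrow> vl_zero_mode N (vl_cA i) i (b6 N k j) v =
     (if i = k then (if j < k then -1 else 1) * Sg N k {#} {FPhi j 1, FPsi k 0} v else 0)
   + (if i = j then (if k \<le> j then -1 else 1) * Sg N j {#BA j 0#} {FPhi k 0, FPsi k 0} v else 0)"
    unfolding b6_def by (subst zm_noB[OF hk0 hcA]) (auto simp: zsimps)
  then show ?thesis using assms by (simp add: sum.distrib)
qed

lemma Dp7: assumes "k < N" "j < N" "j \<noteq> k"
  shows "(\<Sum>i<N. vl_zero_mode N (vl_cA i) i (b7 N k j) v) =
     (if j < k then -1 else 1) * Sg N k {#BA k 0#} {FPhi j 0, FPsi j 0} v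
   + (if k < j then -1 else 1) * Sg N j {#BA k 0#} {FPhi k 0, FPsi j 0} v"
proof -
  have "\<And>i. i < N \<Longrightarrow> vl_zero_mode N (vl_cA i) i (b7 N k j) v =
     (if i = k then (if j < k then -1 else 1) * Sg N k {#BA k 0#} {FPhi j 0, FPsi j 0} v else 0)
   + (if i = j then (if k < j then -1 else 1) * Sg N j {#BA k 0#} {FPhi k 0, FPsi j 0} v else 0)"
    unfolding b7_def using assms(3) by (subst zm_noB[OF hk0 hcA]) (auto simp: zsimps)
  then show ?thesis using assms by (simp add: sum.distrib)
qed


lemma g0cNeg: "(\<lambda>l. g0 N l + vl_cNeg N l) = gz" by (auto simp: g0_def vl_cNeg_def gz_def)
lemma cNeg_of: "n < N \<Longrightarrow> (of_int (vl_cNeg N n) :: complex) = -1" by (simp add: vl_cNeg_def)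

abbreviation S0 where "S0 M F v \<equiv> vl_single ((gz, gz), M, F) v"

lemmas msimps = sum_if_const One_nat_def cNeg_of g0cNeg if_fun_app if0_div if0_mult insert_Diff_if
   psi_phi0 psi_phi1[unfolded One_nat_def] psi_psi filter_insert filter_empty

lemma Dm1: assumes "k < N" "j < N"
  shows "(\<Sum>i<N. vl_zero_mode N (vl_cNeg N) i (b1 N k j) v) = S0 {#BA k 0, BA j 0#} {} v"
proof -
  have "\<And>i. i < N \<Longrightarrow> vl_zero_mode N (vl_cNeg N) i (b1 N k j) v = (if i = k then S0 {#BA k 0, BA j 0#} {} v else 0)"
    unfolding b1_def by (subst zm_noB[OF hk0 hcNeg]) (auto simp: msimps cong: if_cong)
  then show ?thesis using assms by simp
qed

lemma Dm2: assumes "k < N" "j < N"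
  shows "(\<Sum>i<N. vl_zero_mode N (vl_cNeg N) i (b2 N k j) v) = S0 (add_mset (BB j 0) {#BA k 0#}) {} v
     - (\<Sum>i<N. S0 {#BA k 0#} {FPsi i 0, FPhi k 0} v) - (\<Sum>n<N. S0 {#BA n 0, BA k 0#} {} v)"
proof -
  have "\<And>i. i < N \<Longrightarrow> vl_zero_mode N (vl_cNeg N) i (b2 N k j) v = (if i = k then S0 (add_mset (BB j 0) {#BA k 0#}) {} v else 0)
     - S0 {#BA k 0#} {FPsi i 0, FPhi k 0} v - (if i = k then (\<Sum>n<N. S0 {#BA n 0, BA k 0#} {} v) else 0)"
    unfolding b2_def using assms by (subst zm_oneB[OF hk0 hcNeg]) (auto simp: msimps sum_negf cong: if_cong)
  then show ?thesis using assms by (simp add: sum.distrib sum_subtractf)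
qed

lemma Dm3: assumes "k < N"
  shows "(\<Sum>i<N. vl_zero_mode N (vl_cNeg N) i (b3 N k) v) = S0 {#BA k 1#} {} v"
proof -
  have "\<And>i. i < N \<Longrightarrow> vl_zero_mode N (vl_cNeg N) i (b3 N k) v = (if i = k then S0 {#BA k 1#} {} v else 0)"
    unfolding b3_def by (subst zm_noB[OF hk0 hcNeg]) (auto simp: msimps cong: if_cong)
  then show ?thesis using assms by simp
qed

lemma Dm4: assumes "k < N" "j < N"
  shows "(\<Sum>i<N. vl_zero_mode N (vl_cNeg N) i (b4 N k j) v) = - (\<Sum>n<N. S0 {#BA n 0, BB j 0#} {} v)
     - (\<Sum>i<N. S0 {#} {FPsi i 0, FPhi k 1} v) - (\<Sum>n<N. S0 {#BA n 1#} {} v) / 2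
     + (\<Sum>n<N. \<Sum>n'<N. S0 {#BA n 0, BA n' 0#} {} v) / 2"
proof -
  have "\<And>i. i < N \<Longrightarrow> vl_zero_mode N (vl_cNeg N) i (b4 N k j) v = - (if i = k then (\<Sum>n<N. S0 {#BA n 0, BB j 0#} {} v) else 0)
     - S0 {#} {FPsi i 0, FPhi k 1} v - (if i = k then (\<Sum>n<N. S0 {#BA n 1#} {} v) / 2 else 0)
     + (if i = k then (\<Sum>n<N. \<Sum>n'<N. S0 {#BA n 0, BA n' 0#} {} v) / 2 else 0)"
    unfolding b4_def using assms by (subst zm_oneB[OF hk0 hcNeg]) (auto simp: msimps sum_negf sum_divide_distrib cong: if_cong)
  then show ?thesis using assms by (simp add: sum.distrib sum_subtractf sum_negf)
qed

lemma Dm5: assumes "k < N" "j < N"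
  shows "(\<Sum>i<N. vl_zero_mode N (vl_cNeg N) i (b5 N k j) v) = - (\<Sum>n<N. S0 {#BA n 0, BA j 0#} {} v)"
proof -
  have "\<And>i. i < N \<Longrightarrow> vl_zero_mode N (vl_cNeg N) i (b5 N k j) v = - (if i = k then (\<Sum>n<N. S0 {#BA n 0, BA j 0#} {} v) else 0)"
    unfolding b5_def by (subst zm_noB[OF hk0 hcNeg]) (auto simp: msimps sum_negf cong: if_cong)
  then show ?thesis using assms by (simp add: sum_negf)
qed

lemma Dm6: assumes "k < N" "j < N"
  shows "(\<Sum>i<N. vl_zero_mode N (vl_cNeg N) i (b6 N k j) v) =
     (if j < k then -1 else 1) * S0 {#} {FPhi j 1, FPsi k 0} v
   - (if k \<le> j then -1 else 1) * (\<Sum>n<N. S0 {#BA n 0#} {FPhi k 0, FPsi k 0} v)"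
proof -
  have "\<And>i. i < N \<Longrightarrow> vl_zero_mode N (vl_cNeg N) i (b6 N k j) v =
     (if i = k then (if j < k then -1 else 1) * S0 {#} {FPhi j 1, FPsi k 0} v else 0)
   - (if i = j then (if k \<le> j then -1 else 1) * (\<Sum>n<N. S0 {#BA n 0#} {FPhi k 0, FPsi k 0} v) else 0)"
    unfolding b6_def by (subst zm_noB[OF hk0 hcNeg]) (auto simp: msimps sum_negf sum_distrib_left cong: if_cong)
  then show ?thesis using assms by (simp add: sum_subtractf)
qed

lemma Dm7: assumes "k < N" "j < N" "j \<noteq> k"
  shows "(\<Sum>i<N. vl_zero_mode N (vl_cNeg N) i (b7 N k j) v) =
     (if j < k then -1 else 1) * S0 {#BA k 0#} {FPhi j 0, FPsi j 0} v
   + (if k < j then -1 else 1) * S0 {#BA k 0#} {FPhi k 0, FPsi j 0} v"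
proof -
  have "\<And>i. i < N \<Longrightarrow> vl_zero_mode N (vl_cNeg N) i (b7 N k j) v =
     (if i = k then (if j < k then -1 else 1) * S0 {#BA k 0#} {FPhi j 0, FPsi j 0} v else 0)
   + (if i = j then (if k < j then -1 else 1) * S0 {#BA k 0#} {FPhi k 0, FPsi j 0} v else 0)"
    unfolding b7_def using assms(3) by (subst zm_noB[OF hk0 hcNeg]) (auto simp: msimps cong: if_cong)
  then show ?thesis using assms by (simp add: sum.distrib)
qed



lemma vl_ht_eq:
  fixes n :: "nat \<Rightarrow> nat"
  assumes z: "\<exists>i\<le>N. n i = 0" and e: "\<forall>i<N. a i = int (n i) - int (n N)"
  shows "vl_ht N a = (\<Sum>i\<le>N. n i)"
  unfolding vl_ht_def
proof (rule the_equality)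
  show "\<exists>n'::nat\<Rightarrow>nat. (\<exists>i\<le>N. n' i = 0) \<and> (\<forall>i<N. a i = int (n' i) - int (n' N)) \<and> (\<Sum>i\<le>N. n i) = (\<Sum>i\<le>N. n' i)"
    using z e by blast
next
  fix h assume "\<exists>n'::nat\<Rightarrow>nat. (\<exists>i\<le>N. n' i = 0) \<and> (\<forall>i<N. a i = int (n' i) - int (n' N)) \<and> h = (\<Sum>i\<le>N. n' i)"
  then obtain n' where z': "\<exists>i\<le>N. n' i = 0" and e': "\<forall>i<N. a i = int (n' i) - int (n' N)" and h: "h = (\<Sum>i\<le>N. n' i)" by blast
  define d where "d = int (n' N) - int (n N)"
  have dd: "\<And>i. i \<le> N \<Longrightarrow> int (n' i) - int (n i) = d"
  proof -
    fix i assume "i \<le> N"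
    then show "int (n' i) - int (n i) = d"
    proof (cases "i < N")
      case True then show ?thesis using e e' unfolding d_def by force
    next
      case False then have "i = N" using \<open>i \<le> N\<close> by simp
      then show ?thesis unfolding d_def by simp
    qed
  qed
  obtain i0 where "i0 \<le> N" "n i0 = 0" using z by blast
  then have d1: "d \<ge> 0" using dd[of i0] by simp
  obtain i1 where "i1 \<le> N" "n' i1 = 0" using z' by blast
  then have d2: "d \<le> 0" using dd[of i1] by simp
  have "\<And>i. i \<le> N \<Longrightarrow> n' i = n i" using dd d1 d2 by fastforce
  then show "h = (\<Sum>i\<le>N. n i)" unfolding h by (intro sum.cong) auto
qed

lemma sum_ltN: "(\<Sum>i\<le>N. (if i < N then (1::nat) else 0)) = N"
proof -
  have "(\<Sum>i\<le>N. (if i < N then (1::nat) else 0)) = (\<Sum>i<N. (if i < N then (1::nat) else 0)) + 0"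
    by (simp add: lessThan_Suc_atMost[symmetric])
  also have "\<dots> = N" by simp
  finally show ?thesis .
qed

lemma ht_g0: "vl_ht N (g0 N) = N"
proof -
  have "vl_ht N (g0 N) = (\<Sum>i\<le>N. (\<lambda>i. if i < N then 1 else 0) i)"
    by (rule vl_ht_eq) (auto simp: g0_def)
  also have "\<dots> = N" by (rule sum_ltN)
  finally show ?thesis .
qed

lemma ht_cA: "i < N \<Longrightarrow> vl_ht N (vl_cA i) = 1"
proof -
  assume i: "i < N"
  have "vl_ht N (vl_cA i) = (\<Sum>j\<le>N. (\<lambda>j. if j = i then 1 else 0) j)"
    by (rule vl_ht_eq) (use i in \<open>auto simp: vl_cA_def\<close>)
  also have "\<dots> = 1" using i by simp
  finally show ?thesis .
qed

lemma ht_g0cA: "i < N \<Longrightarrow> vl_ht N (\<lambda>j. vl_cA i j + g0 N j) = N + 1"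
proof -
  assume i: "i < N"
  have "vl_ht N (\<lambda>j. vl_cA i j + g0 N j) = (\<Sum>j\<le>N. (\<lambda>j. if j = i then 2 else if j < N then 1 else 0) j)"
    by (rule vl_ht_eq) (use i in \<open>auto simp: vl_cA_def g0_def\<close>)
  also have "\<dots> = N + 1"
  proof -
    have "(\<Sum>j\<le>N. (\<lambda>j. if j = i then 2 else if j < N then 1 else 0) j) = (\<Sum>j\<le>N. ((\<lambda>j. if j < N then 1 else 0) j + (if j = i then 1 else 0)))"
      by (rule sum.cong) (use i in auto)
    also have "\<dots> = N + 1" using i by (simp add: sum.distrib sum_ltN)
    finally show ?thesis .
  qed
  finally show ?thesis .
qed

lemma ht_cNeg: "1 \<le> N \<Longrightarrow> vl_ht N (vl_cNeg N) = 1"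
proof -
  assume N: "1 \<le> N"
  have "vl_ht N (vl_cNeg N) = (\<Sum>j\<le>N. (\<lambda>j. if j = N then 1 else 0) j)"
    by (rule vl_ht_eq) (use N in \<open>auto simp: vl_cNeg_def intro: exI[of _ 0]\<close>)
  also have "\<dots> = 1" by simp
  finally show ?thesis .
qed

lemma ht_zero: "vl_ht N (\<lambda>_. 0) = 0"
proof -
  have "vl_ht N (\<lambda>_. 0) = (\<Sum>j\<le>N. (\<lambda>j. 0::nat) j)"
    by (rule vl_ht_eq) auto
  then show ?thesis by simp
qed

lemma ht_g0cNeg: "vl_ht N (\<lambda>j. vl_cNeg N j + g0 N j) = 0"
proof -
  have "(\<lambda>j. vl_cNeg N j + g0 N j) = (\<lambda>_. 0)" by (auto simp: vl_cNeg_def g0_def)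
  then show ?thesis by (simp add: ht_zero)
qed


definition sN :: "nat \<Rightarrow> complex" where "sN N = 1 / (of_nat N + 1)"

definition bx :: "nat \<Rightarrow> nat \<times> nat \<times> nat \<Rightarrow> vl_basis" where
  "bx N t = (case t of (k, j, r) \<Rightarrow> if r = 0 then b1 N k j else if r = 1 then b2 N k j else if r = 2 then b3 N k
     else if r = 3 then b4 N k j else if r = 4 then b5 N k j else if r = 5 then b6 N k j else b7 N k j)"

definition cf1 :: "nat \<Rightarrow> nat \<Rightarrow> nat \<Rightarrow> complex" where "cf1 N k j = - sN N"
definition cf2 :: "nat \<Rightarrow> nat \<Rightarrow> nat \<Rightarrow> complex" where "cf2 N k j = sN N - (if j = k then 1 else 0)"
definition cf3 :: "nat \<Rightarrow> nat \<Rightarrow> nat \<Rightarrow> complex" where "cf3 N k j = (if j = k then of_nat N * sN N / 2 else 0)"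
definition cf4 :: "nat \<Rightarrow> nat \<Rightarrow> nat \<Rightarrow> complex" where "cf4 N k j = (if j = k then 1 else 0) - sN N"
definition cf5 :: "nat \<Rightarrow> nat \<Rightarrow> nat \<Rightarrow> complex" where "cf5 N k j = sN N - (if j = k then of_nat N * sN N / 2 else 0)"
definition cf6 :: "nat \<Rightarrow> nat \<Rightarrow> nat \<Rightarrow> complex" where "cf6 N k j = (if j = k then sN N - 1 else if k < j then sN N else - sN N)"
definition cf7 :: "nat \<Rightarrow> nat \<Rightarrow> nat \<Rightarrow> complex" where "cf7 N k j = (if j = k then 0 else if k < j then sN N else - sN N)"

definition cf :: "nat \<Rightarrow> nat \<times> nat \<times> nat \<Rightarrow> complex" where
  "cf N t = (case t of (k, j, r) \<Rightarrow> if r = 0 then cf1 N k j else if r = 1 then cf2 N k j else if r = 2 then cf3 N k j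
     else if r = 3 then cf4 N k j else if r = 4 then cf5 N k j else if r = 5 then cf6 N k j else cf7 N k j)"

definition IT :: "nat \<Rightarrow> (nat \<times> nat \<times> nat) set" where "IT N = {..<N} \<times> {..<N} \<times> {..<7}"

definition yv :: "nat \<Rightarrow> vl_vec" where "yv N = (\<lambda>v. \<Sum>t\<in>IT N. cf N t * vl_single (bx N t) v)"

lemma lin_sum:
  assumes fin: "finite I"
  shows "vl_lin f (\<lambda>v. \<Sum>t\<in>I. c t * vl_single (x t) v) = (\<lambda>v. \<Sum>t\<in>I. c t * f (x t) v)"
proof (rule ext)
  fix v
  let ?u = "\<lambda>v. \<Sum>t\<in>I. c t * vl_single (x t) v"
  have supp: "{z. ?u z \<noteq> 0} \<subseteq> x ` I"
  proof
    fix z assume "z \<in> {z. ?u z \<noteq> 0}"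
    then obtain t where "t \<in> I" "c t * vl_single (x t) z \<noteq> 0" by (auto elim: sum.not_neutral_contains_not_neutral)
    then show "z \<in> x ` I" by (auto simp: vl_single_def split: if_splits)
  qed
  have "vl_lin f ?u v = (\<Sum>z\<in>x ` I. ?u z * f z v)"
    unfolding vl_lin_def by (rule sum.mono_neutral_left) (use fin supp in auto)
  also have "\<dots> = (\<Sum>z\<in>x ` I. \<Sum>t\<in>I. c t * vl_single (x t) z * f z v)" by (simp add: sum_distrib_right)
  also have "\<dots> = (\<Sum>t\<in>I. \<Sum>z\<in>x ` I. c t * vl_single (x t) z * f z v)" by (rule sum.swap)
  also have "\<dots> = (\<Sum>t\<in>I. c t * f (x t) v)"
  proof (rule sum.cong[OF refl])
    fix t assume t: "t \<in> I"
    have "\<And>z. c t * vl_single (x t) z * f z v = (if x t = z then c t * f (x t) v else 0)"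
      by (auto simp: vl_single_def)
    then show "(\<Sum>z\<in>x ` I. c t * vl_single (x t) z * f z v) = c t * f (x t) v" using t fin by (simp add: sum.delta')
  qed
  finally show "vl_lin f ?u v = (\<Sum>t\<in>I. c t * f (x t) v)" .
qed

lemma finite_IT: "finite (IT N)" by (simp add: IT_def)

lemma sum_IT: "(\<Sum>t\<in>IT N. cf N t * g (bx N t)) = (\<Sum>k<N. \<Sum>j<N.
    cf1 N k j * g (b1 N k j) + cf2 N k j * g (b2 N k j) + cf3 N k j * g (b3 N k) + cf4 N k j * g (b4 N k j)
  + cf5 N k j * g (b5 N k j) + cf6 N k j * g (b6 N k j) + cf7 N k j * g (b7 N k j))"
proof -
  have "(\<Sum>t\<in>IT N. cf N t * g (bx N t)) = (\<Sum>k<N. \<Sum>j<N. \<Sum>r<7. cf N (k,j,r) * g (bx N (k,j,r)))"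
    unfolding IT_def by (simp add: sum.cartesian_product)
  also have "\<dots> = (\<Sum>k<N. \<Sum>j<N.
    cf1 N k j * g (b1 N k j) + cf2 N k j * g (b2 N k j) + cf3 N k j * g (b3 N k) + cf4 N k j * g (b4 N k j)
  + cf5 N k j * g (b5 N k j) + cf6 N k j * g (b6 N k j) + cf7 N k j * g (b7 N k j))"
    by (simp add: eval_nat_numeral cf_def bx_def algebra_simps)
  finally show ?thesis .
qed


lemma fst_b: "fst (fst (b1 N k j)) = g0 N" "fst (fst (b2 N k j)) = g0 N" "fst (fst (b3 N k)) = g0 N"
  "fst (fst (b4 N k j)) = g0 N" "fst (fst (b5 N k j)) = g0 N" "fst (fst (b6 N k j)) = g0 N" "fst (fst (b7 N k j)) = g0 N"
  by (simp_all add: b1_def b2_def b3_def b4_def b5_def b6_def b7_def)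

lemma qexpA: "i < N \<Longrightarrow> vl_qexp N (vl_cA i) (g0 N) = 0"
  by (simp add: vl_qexp_def ht_cA ht_g0 ht_g0cA)
lemma qexpNeg: "1 \<le> N \<Longrightarrow> vl_qexp N (vl_cNeg N) (g0 N) = N + 1"
  by (simp add: vl_qexp_def ht_cNeg ht_g0 ht_g0cNeg)

lemma Dq0: assumes "1 \<le> N" "fst (fst x) = g0 N"
  shows "vl_Dq_basis N 0 x v = (\<Sum>i<N. vl_zero_mode N (vl_cA i) i x v)"
  unfolding vl_Dq_basis_def using assms by (simp add: qexpA qexpNeg)

lemma Dq10: assumes "1 \<le> N" "fst (fst x) = g0 N"
  shows "vl_Dq_basis N 1 x v - vl_Dq_basis N 0 x v = - (\<Sum>i<N. vl_zero_mode N (vl_cNeg N) i x v)"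
  unfolding vl_Dq_basis_def using assms by (simp add: qexpA qexpNeg sum_subtractf)

lemma dplus_y: assumes "1 \<le> N"
  shows "vl_dplus N (yv N) v = (\<Sum>k<N. \<Sum>j<N.
    cf1 N k j * (\<Sum>i<N. vl_zero_mode N (vl_cA i) i (b1 N k j) v) + cf2 N k j * (\<Sum>i<N. vl_zero_mode N (vl_cA i) i (b2 N k j) v)
  + cf3 N k j * (\<Sum>i<N. vl_zero_mode N (vl_cA i) i (b3 N k) v) + cf4 N k j * (\<Sum>i<N. vl_zero_mode N (vl_cA i) i (b4 N k j) v)
  + cf5 N k j * (\<Sum>i<N. vl_zero_mode N (vl_cA i) i (b5 N k j) v) + cf6 N k j * (\<Sum>i<N. vl_zero_mode N (vl_cA i) i (b6 N k j) v)
  + cf7 N k j * (\<Sum>i<N. vl_zero_mode N (vl_cA i) i (b7 N k j) v))" (is "_ = ?rhs")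
proof -
  have "vl_dplus N (yv N) v = (\<Sum>t\<in>IT N. cf N t * vl_Dq_basis N 0 (bx N t) v)"
    unfolding vl_dplus_def vl_Dq_def yv_def by (simp add: lin_sum[OF finite_IT])
  also have "\<dots> = ?rhs" 
    by (subst sum_IT[where g = "\<lambda>x. vl_Dq_basis N 0 x v"]) (simp add: Dq0[OF assms] fst_b)
  finally show ?thesis .
qed

lemma dminus_y: assumes "1 \<le> N"
  shows "vl_dminus N (yv N) v = (\<Sum>k<N. \<Sum>j<N.
    cf1 N k j * (- (\<Sum>i<N. vl_zero_mode N (vl_cNeg N) i (b1 N k j) v)) + cf2 N k j * (- (\<Sum>i<N. vl_zero_mode N (vl_cNeg N) i (b2 N k j) v))
  + cf3 N k j * (- (\<Sum>i<N. vl_zero_mode N (vl_cNeg N) i (b3 N k) v)) + cf4 N k j * (- (\<Sum>i<N. vl_zero_mode N (vl_cNeg N) i (b4 N k j) v))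
  + cf5 N k j * (- (\<Sum>i<N. vl_zero_mode N (vl_cNeg N) i (b5 N k j) v)) + cf6 N k j * (- (\<Sum>i<N. vl_zero_mode N (vl_cNeg N) i (b6 N k j) v))
  + cf7 N k j * (- (\<Sum>i<N. vl_zero_mode N (vl_cNeg N) i (b7 N k j) v)))" (is "_ = ?rhs")
proof -
  have "vl_dminus N (yv N) v = (\<Sum>t\<in>IT N. cf N t * (vl_Dq_basis N 1 (bx N t) v - vl_Dq_basis N 0 (bx N t) v))"
    unfolding vl_dminus_def vl_Dq_def yv_def by (simp add: lin_sum[OF finite_IT] sum_subtractf right_diff_distrib)
  also have "\<dots> = ?rhs" 
    by (subst sum_IT[where g = "\<lambda>x. vl_Dq_basis N 1 x v - vl_Dq_basis N 0 x v"])
       (simp add: Dq10[OF assms] fst_b)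
  finally show ?thesis .
qed


lemma sN_eq: "sN N * (of_nat N + 1) = 1"
proof -
  have "(of_nat N + 1 :: complex) \<noteq> 0"
    by (metis of_nat_Suc of_nat_eq_0_iff add.commute nat.distinct(1))
  then show ?thesis unfolding sN_def by simp
qed

definition Ep where "Ep N v k j =
   cf1 N k j * Sg N k {#BA k 0, BA j 0#} {} v
 + cf2 N k j * (Sg N k (add_mset (BB j 0) {#BA k 0#}) {} v + Sg N j {#BA k 0#} {FPsi j 0, FPhi k 0} v - (if j = k then Sg N k {#BA k 0, BA k 0#} {} v else 0))
 + cf3 N k j * Sg N k {#BA k 1#} {} v
 + cf4 N k j * (Sg N k {#BA k 0, BB j 0#} {} v + Sg N j {#} {FPsi j 0, FPhi k 1} v - (if j = k then Sg N k {#BA k 1#} {} v / 2 + Sg N k {#BA k 0, BA k 0#} {} v / 2 else 0))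
 + cf5 N k j * Sg N k {#BA k 0, BA j 0#} {} v
 + cf6 N k j * ((if j < k then -1 else 1) * Sg N k {#} {FPhi j 1, FPsi k 0} v + (if k \<le> j then -1 else 1) * Sg N j {#BA j 0#} {FPhi k 0, FPsi k 0} v)
 + cf7 N k j * ((if j < k then -1 else 1) * Sg N k {#BA k 0#} {FPhi j 0, FPsi j 0} v + (if k < j then -1 else 1) * Sg N j {#BA k 0#} {FPhi k 0, FPsi j 0} v)"

definition Qp where "Qp N v k j =
   cf6 N k j * (if j < k then -1 else 1) * Sg N k {#} {FPhi j 1, FPsi k 0} v
 + cf7 N k j * (if j < k then -1 else 1) * Sg N k {#BA k 0#} {FPhi j 0, FPsi j 0} v"

lemma Ep_zero: assumes "k < N" "j < N" shows "Ep N v k j - Qp N v k j + Qp N v j k = 0"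
proof -
  have hs: "sN N * (of_nat N + 1) = 1" by (rule sN_eq)
  have nz: "(of_nat N + 1 :: complex) \<noteq> 0"
    by (metis of_nat_Suc of_nat_eq_0_iff add.commute nat.distinct(1))
  have nz2: "(2 + of_nat N * 2 :: complex) \<noteq> 0" using nz by (metis distrib_right mult_eq_0_iff mult_1 add.commute zero_neq_numeral)
  consider "j < k" | "j = k" | "k < j" by linarith
  then show ?thesis
  proof cases
    case 1
    then show ?thesis unfolding Ep_def Qp_def cf1_def cf2_def cf3_def cf4_def cf5_def cf6_def cf7_def
      by (simp add: insert_commute add_mset_commute algebra_simps)
  next
    case 2
    have "Ep N v k j - Qp N v k j + Qp N v j k = (sN N * (of_nat N + 1) - 1) * (Sg N k {#BA k 1#} {} v - Sg N k {#BA k 0, BA k 0#} {} v) / 2"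
      unfolding Ep_def Qp_def cf1_def cf2_def cf3_def cf4_def cf5_def cf6_def cf7_def using 2
      by (simp add: insert_commute add_mset_commute algebra_simps add_divide_distrib diff_divide_distrib)
    then show ?thesis using hs by simp
  next
    case 3
    then show ?thesis unfolding Ep_def Qp_def cf1_def cf2_def cf3_def cf4_def cf5_def cf6_def cf7_def
      by (simp add: insert_commute add_mset_commute algebra_simps)
  qed
qed


lemma C7p: assumes "k < N" "j < N"
  shows "cf7 N k j * (\<Sum>i<N. vl_zero_mode N (vl_cA i) i (b7 N k j) v) = cf7 N k j * ((if j < k then -1 else 1) * Sg N k {#BA k 0#} {FPhi j 0, FPsi j 0} v + (if k < j then -1 else 1) * Sg N j {#BA k 0#} {FPhi k 0, FPsi j 0} v)"
proof (cases "j = k")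
  case True then show ?thesis by (simp add: cf7_def)
next
  case False then show ?thesis using Dp7[OF assms False] by simp
qed

lemma swap_trick:
  fixes E Q :: "nat \<Rightarrow> nat \<Rightarrow> complex"
  shows "(\<Sum>k<N. \<Sum>j<N. E k j) = (\<Sum>k<N. \<Sum>j<N. E k j - Q k j + Q j k)"
proof -
  have "(\<Sum>k<N. \<Sum>j<N. Q k j) = (\<Sum>k<N. \<Sum>j<N. Q j k)" by (rule sum.swap)
  then show ?thesis by (simp add: sum.distrib sum_subtractf)
qed

lemma dplus_zero: assumes "1 \<le> N" shows "vl_dplus N (yv N) v = 0"
proof -
  have "vl_dplus N (yv N) v = (\<Sum>k<N. \<Sum>j<N. Ep N v k j)"
    unfolding dplus_y[OF assms] Ep_def
    by (rule sum.cong[OF refl], rule sum.cong[OF refl]) (simp add: Dp1 Dp2 Dp3 Dp4 Dp5 Dp6 C7p)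
  also have "\<dots> = (\<Sum>k<N. \<Sum>j<N. Ep N v k j - Qp N v k j + Qp N v j k)" by (rule swap_trick)
  also have "\<dots> = 0" by (simp add: Ep_zero)
  finally show ?thesis .
qed


definition Em where "Em N v k j =
   cf1 N k j * (- S0 {#BA k 0, BA j 0#} {} v)
 + cf2 N k j * (- (S0 (add_mset (BB j 0) {#BA k 0#}) {} v
     - (\<Sum>i<N. S0 {#BA k 0#} {FPsi i 0, FPhi k 0} v) - (\<Sum>n<N. S0 {#BA n 0, BA k 0#} {} v)))
 + cf3 N k j * (- S0 {#BA k 1#} {} v)
 + cf4 N k j * (- (- (\<Sum>n<N. S0 {#BA n 0, BB j 0#} {} v)
     - (\<Sum>i<N. S0 {#} {FPsi i 0, FPhi k 1} v) - (\<Sum>n<N. S0 {#BA n 1#} {} v) / 2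
     + (\<Sum>n<N. \<Sum>n'<N. S0 {#BA n 0, BA n' 0#} {} v) / 2))
 + cf5 N k j * (- (- (\<Sum>n<N. S0 {#BA n 0, BA j 0#} {} v)))
 + cf6 N k j * (- ((if j < k then -1 else 1) * S0 {#} {FPhi j 1, FPsi k 0} v
   - (if k \<le> j then -1 else 1) * (\<Sum>n<N. S0 {#BA n 0#} {FPhi k 0, FPsi k 0} v)))
 + cf7 N k j * (- ((if j < k then -1 else 1) * S0 {#BA k 0#} {FPhi j 0, FPsi j 0} v
   + (if k < j then -1 else 1) * S0 {#BA k 0#} {FPhi k 0, FPsi j 0} v))"

lemma C7m: assumes "k < N" "j < N"
  shows "cf7 N k j * (- (\<Sum>i<N. vl_zero_mode N (vl_cNeg N) i (b7 N k j) v)) = cf7 N k j * (- ((if j < k then -1 else 1) * S0 {#BA k 0#} {FPhi j 0, FPsi j 0} v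
   + (if k < j then -1 else 1) * S0 {#BA k 0#} {FPhi k 0, FPsi j 0} v))"
proof (cases "j = k")
  case True then show ?thesis by (simp add: cf7_def)
next
  case False then show ?thesis using Dm7[OF assms False] by simp
qed

lemma dminus_expand: assumes "1 \<le> N" shows "vl_dminus N (yv N) v = (\<Sum>k<N. \<Sum>j<N. Em N v k j)"
  unfolding dminus_y[OF assms] Em_def
  by (rule sum.cong[OF refl], rule sum.cong[OF refl]) (simp only: Dm1 Dm2 Dm3 Dm4 Dm5 Dm6 C7m lessThan_iff)


lemma gA: "(\<Sum>k<(N::nat). \<Sum>j<N. c k j * (\<Sum>i<N. X k i)) = (\<Sum>k<N. \<Sum>j<N. (\<Sum>j'<N. c k j') * X k j :: complex)"
proof (rule sum.cong[OF refl])
  fix k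
  have "(\<Sum>j<N. c k j * (\<Sum>i<N. X k i)) = (\<Sum>j'<N. c k j') * (\<Sum>i<N. X k i)" by (rule sum_distrib_right[symmetric])
  also have "\<dots> = (\<Sum>j<N. (\<Sum>j'<N. c k j') * X k j)" by (rule sum_distrib_left)
  finally show "(\<Sum>j<N. c k j * (\<Sum>i<N. X k i)) = (\<Sum>j<N. (\<Sum>j'<N. c k j') * X k j)" .
qed

lemma gB: "(\<Sum>k<(N::nat). \<Sum>j<N. c k j * (\<Sum>n<N. X n j)) = (\<Sum>k<N. \<Sum>j<N. (\<Sum>k'<N. c k' j) * X k j :: complex)"
proof -
  have "(\<Sum>k<N. \<Sum>j<N. c k j * (\<Sum>n<N. X n j)) = (\<Sum>j<N. \<Sum>k<N. c k j * (\<Sum>n<N. X n j))" by (rule sum.swap)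
  also have "\<dots> = (\<Sum>j<N. \<Sum>n<N. (\<Sum>k'<N. c k' j) * X n j)"
  proof (rule sum.cong[OF refl])
    fix j
    have "(\<Sum>k<N. c k j * (\<Sum>n<N. X n j)) = (\<Sum>k'<N. c k' j) * (\<Sum>n<N. X n j)" by (rule sum_distrib_right[symmetric])
    also have "\<dots> = (\<Sum>n<N. (\<Sum>k'<N. c k' j) * X n j)" by (rule sum_distrib_left)
    finally show "(\<Sum>k<N. c k j * (\<Sum>n<N. X n j)) = (\<Sum>n<N. (\<Sum>k'<N. c k' j) * X n j)" .
  qed
  also have "\<dots> = (\<Sum>n<N. \<Sum>j<N. (\<Sum>k'<N. c k' j) * X n j)" by (rule sum.swap)
  finally show ?thesis .
qed

lemma gC: "(\<Sum>k<(N::nat). \<Sum>j<N. c k j * (\<Sum>n<N. Z n)) = (\<Sum>k<N. \<Sum>j<N. (if j = k then (\<Sum>k'<N. \<Sum>j'<N. c k' j') * Z k else 0) :: complex)"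
proof -
  have "(\<Sum>k<N. \<Sum>j<N. c k j * (\<Sum>n<N. Z n)) = (\<Sum>k<N. \<Sum>j<N. c k j) * (\<Sum>n<N. Z n)"
    by (simp only: sum_distrib_right)
  also have "\<dots> = (\<Sum>k<N. (\<Sum>k'<N. \<Sum>j'<N. c k' j') * Z k)" by (rule sum_distrib_left)
  also have "\<dots> = (\<Sum>k<N. \<Sum>j<N. (if j = k then (\<Sum>k'<N. \<Sum>j'<N. c k' j') * Z k else 0))"
  proof (rule sum.cong[OF refl])
    fix k assume "k \<in> {..<N}"
    then show "(\<Sum>k'<N. \<Sum>j'<N. c k' j') * Z k = (\<Sum>j<N. (if j = k then (\<Sum>k'<N. \<Sum>j'<N. c k' j') * Z k else 0))"
      using sum.delta[of "{..<N}" k "\<lambda>_. (\<Sum>k'<N. \<Sum>j'<N. c k' j') * Z k"] by simp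
  qed
  finally show ?thesis .
qed

lemma gD: "(\<Sum>k<(N::nat). \<Sum>j<N. c k j * (\<Sum>n<N. \<Sum>n'<N. W n n')) = (\<Sum>k<N. \<Sum>j<N. (\<Sum>k'<N. \<Sum>j'<N. c k' j') * W k j :: complex)"
proof -
  have "(\<Sum>k<N. \<Sum>j<N. c k j * (\<Sum>n<N. \<Sum>n'<N. W n n')) = (\<Sum>k<N. \<Sum>j<N. c k j) * (\<Sum>n<N. \<Sum>n'<N. W n n')"
    by (simp only: sum_distrib_right)
  also have "\<dots> = (\<Sum>k<N. \<Sum>j<N. (\<Sum>k'<N. \<Sum>j'<N. c k' j') * W k j)" by (simp only: sum_distrib_left)
  finally show ?thesis .
qed

lemma sc2: "k < N \<Longrightarrow> (\<Sum>j<N. cf2 N k j) = of_nat N * sN N - 1"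
  by (simp add: cf2_def sum_subtractf)
lemma sc4k: "j < N \<Longrightarrow> (\<Sum>k<N. cf4 N k j) = 1 - of_nat N * sN N"
  by (simp add: cf4_def sum_subtractf)
lemma sc4j: "k < N \<Longrightarrow> (\<Sum>j<N. cf4 N k j) = 1 - of_nat N * sN N"
  by (simp add: cf4_def sum_subtractf)
lemma sc4kj: "(\<Sum>k<N. \<Sum>j<N. cf4 N k j / 2) = of_nat N * (1 - of_nat N * sN N) / 2"
  by (simp add: sc4j sum_divide_distrib[symmetric])
lemma sc4kj': "(\<Sum>k<N. \<Sum>j<N. - cf4 N k j / 2) = - (of_nat N * (1 - of_nat N * sN N) / 2)"
proof -
  have "(\<Sum>k<N. \<Sum>j<N. - cf4 N k j / 2) = - (\<Sum>k<N. \<Sum>j<N. cf4 N k j / 2)" by (simp add: sum_negf)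
  then show ?thesis by (simp add: sc4kj)
qed
lemma sc5: "j < N \<Longrightarrow> (\<Sum>k<N. cf5 N k j) = of_nat N * sN N - of_nat N * sN N / 2"
  by (simp add: cf5_def sum_subtractf)
lemma sc6: "k < N \<Longrightarrow> (\<Sum>j<N. cf6 N k j * (if k \<le> j then -1 else 1)) = 1 - of_nat N * sN N"
proof -
  assume k: "k < N"
  have "\<And>j. cf6 N k j * (if k \<le> j then -1 else 1) = (if j = k then 1 else 0) - sN N"
    by (auto simp: cf6_def)
  then show ?thesis using k by (simp add: sum_subtractf)
qed

definition "Es N v k j = cf1 N k j * (- S0 {#BA k 0, BA j 0#} {} v)
 + cf2 N k j * (- S0 (add_mset (BB j 0) {#BA k 0#}) {} v)
 + cf3 N k j * (- S0 {#BA k 1#} {} v)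
 + cf6 N k j * (- ((if j < k then -1 else 1) * S0 {#} {FPhi j 1, FPsi k 0} v))
 + cf7 N k j * (- ((if j < k then -1 else 1) * S0 {#BA k 0#} {FPhi j 0, FPsi j 0} v
   + (if k < j then -1 else 1) * S0 {#BA k 0#} {FPhi k 0, FPsi j 0} v))"

lemma Em_split: "Em N v k j = Es N v k j
  + cf2 N k j * (\<Sum>i<N. S0 {#BA k 0#} {FPsi i 0, FPhi k 0} v)
  + cf2 N k j * (\<Sum>n<N. S0 {#BA n 0, BA k 0#} {} v)
  + cf4 N k j * (\<Sum>n<N. S0 {#BA n 0, BB j 0#} {} v)
  + cf4 N k j * (\<Sum>i<N. S0 {#} {FPsi i 0, FPhi k 1} v)
  + cf4 N k j / 2 * (\<Sum>n<N. S0 {#BA n 1#} {} v)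
  + - cf4 N k j / 2 * (\<Sum>n<N. \<Sum>n'<N. S0 {#BA n 0, BA n' 0#} {} v)
  + cf5 N k j * (\<Sum>n<N. S0 {#BA n 0, BA j 0#} {} v)
  + cf6 N k j * (if k \<le> j then -1 else 1) * (\<Sum>n<N. S0 {#BA n 0#} {FPhi k 0, FPsi k 0} v)"
  unfolding Em_def Es_def by (simp add: algebra_simps)


lemma Ns: "of_nat N * sN N = 1 - sN N"
  using sN_eq[of N] by (simp add: algebra_simps)

lemma sc2': "k < N \<Longrightarrow> (\<Sum>j<N. cf2 N k j) = - sN N" using sc2 Ns by simp
lemma sc4k': "j < N \<Longrightarrow> (\<Sum>k<N. cf4 N k j) = sN N" using sc4k Ns by simp
lemma sc4j': "k < N \<Longrightarrow> (\<Sum>j<N. cf4 N k j) = sN N" using sc4j Ns by simp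
lemma sc4kj2: "(\<Sum>k<N. \<Sum>j<N. cf4 N k j / 2) = (1 - sN N) / 2" using sc4kj[of N] Ns[of N] by simp
lemma sc4kj2': "(\<Sum>k<N. \<Sum>j<N. - cf4 N k j / 2) = - ((1 - sN N) / 2)" using sc4kj'[of N] Ns[of N] by simp
lemma sc5': "j < N \<Longrightarrow> (\<Sum>k<N. cf5 N k j) = (1 - sN N) / 2" using sc5[of j N] Ns[of N] by (simp add: field_simps)
lemma sc6': "k < N \<Longrightarrow> (\<Sum>j<N. cf6 N k j * (if k \<le> j then -1 else 1)) = sN N" using sc6 Ns by simp

definition "Gt N v k j = Es N v k j
  + (\<Sum>j'<N. cf2 N k j') * S0 {#BA k 0#} {FPsi j 0, FPhi k 0} v
  + (\<Sum>j'<N. cf2 N k j') * S0 {#BA j 0, BA k 0#} {} v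
  + (\<Sum>k'<N. cf4 N k' j) * S0 {#BA k 0, BB j 0#} {} v
  + (\<Sum>j'<N. cf4 N k j') * S0 {#} {FPsi j 0, FPhi k 1} v
  + (if j = k then (\<Sum>k'<N. \<Sum>j'<N. cf4 N k' j' / 2) * S0 {#BA k 1#} {} v else 0)
  + (\<Sum>k'<N. \<Sum>j'<N. - cf4 N k' j' / 2) * S0 {#BA k 0, BA j 0#} {} v
  + (\<Sum>k'<N. cf5 N k' j) * S0 {#BA k 0, BA j 0#} {} v
  + (\<Sum>j'<N. cf6 N k j' * (if k \<le> j' then -1 else 1)) * S0 {#BA j 0#} {FPhi k 0, FPsi k 0} v"

lemma Em_Gt: "(\<Sum>k<N. \<Sum>j<N. Em N v k j) = (\<Sum>k<N. \<Sum>j<N. Gt N v k j)"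
proof -
  have "(\<Sum>k<N. \<Sum>j<N. Em N v k j) = (\<Sum>k<N. \<Sum>j<N. Es N v k j)
  + (\<Sum>k<N. \<Sum>j<N. cf2 N k j * (\<Sum>i<N. S0 {#BA k 0#} {FPsi i 0, FPhi k 0} v))
  + (\<Sum>k<N. \<Sum>j<N. cf2 N k j * (\<Sum>n<N. S0 {#BA n 0, BA k 0#} {} v))
  + (\<Sum>k<N. \<Sum>j<N. cf4 N k j * (\<Sum>n<N. S0 {#BA n 0, BB j 0#} {} v))
  + (\<Sum>k<N. \<Sum>j<N. cf4 N k j * (\<Sum>i<N. S0 {#} {FPsi i 0, FPhi k 1} v))
  + (\<Sum>k<N. \<Sum>j<N. cf4 N k j / 2 * (\<Sum>n<N. S0 {#BA n 1#} {} v))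
  + (\<Sum>k<N. \<Sum>j<N. - cf4 N k j / 2 * (\<Sum>n<N. \<Sum>n'<N. S0 {#BA n 0, BA n' 0#} {} v))
  + (\<Sum>k<N. \<Sum>j<N. cf5 N k j * (\<Sum>n<N. S0 {#BA n 0, BA j 0#} {} v))
  + (\<Sum>k<N. \<Sum>j<N. cf6 N k j * (if k \<le> j then -1 else 1) * (\<Sum>n<N. S0 {#BA n 0#} {FPhi k 0, FPsi k 0} v))"
    unfolding Em_split by (simp only: sum.distrib)
  also have "\<dots> = (\<Sum>k<N. \<Sum>j<N. Es N v k j)
  + (\<Sum>k<N. \<Sum>j<N. (\<Sum>j'<N. cf2 N k j') * S0 {#BA k 0#} {FPsi j 0, FPhi k 0} v)
  + (\<Sum>k<N. \<Sum>j<N. (\<Sum>j'<N. cf2 N k j') * S0 {#BA j 0, BA k 0#} {} v)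
  + (\<Sum>k<N. \<Sum>j<N. (\<Sum>k'<N. cf4 N k' j) * S0 {#BA k 0, BB j 0#} {} v)
  + (\<Sum>k<N. \<Sum>j<N. (\<Sum>j'<N. cf4 N k j') * S0 {#} {FPsi j 0, FPhi k 1} v)
  + (\<Sum>k<N. \<Sum>j<N. (if j = k then (\<Sum>k'<N. \<Sum>j'<N. cf4 N k' j' / 2) * S0 {#BA k 1#} {} v else 0))
  + (\<Sum>k<N. \<Sum>j<N. (\<Sum>k'<N. \<Sum>j'<N. - cf4 N k' j' / 2) * S0 {#BA k 0, BA j 0#} {} v)
  + (\<Sum>k<N. \<Sum>j<N. (\<Sum>k'<N. cf5 N k' j) * S0 {#BA k 0, BA j 0#} {} v)
  + (\<Sum>k<N. \<Sum>j<N. (\<Sum>j'<N. cf6 N k j' * (if k \<le> j' then -1 else 1)) * S0 {#BA j 0#} {FPhi k 0, FPsi k 0} v)"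
  proof -
    have e1: "(\<Sum>k<N. \<Sum>j<N. cf2 N k j * (\<Sum>i<N. S0 {#BA k 0#} {FPsi i 0, FPhi k 0} v)) = (\<Sum>k<N. \<Sum>j<N. (\<Sum>j'<N. cf2 N k j') * S0 {#BA k 0#} {FPsi j 0, FPhi k 0} v)"
      by (rule gA)
    have e2: "(\<Sum>k<N. \<Sum>j<N. cf2 N k j * (\<Sum>n<N. S0 {#BA n 0, BA k 0#} {} v)) = (\<Sum>k<N. \<Sum>j<N. (\<Sum>j'<N. cf2 N k j') * S0 {#BA j 0, BA k 0#} {} v)"
      by (rule gA)
    have e3: "(\<Sum>k<N. \<Sum>j<N. cf4 N k j * (\<Sum>n<N. S0 {#BA n 0, BB j 0#} {} v)) = (\<Sum>k<N. \<Sum>j<N. (\<Sum>k'<N. cf4 N k' j) * S0 {#BA k 0, BB j 0#} {} v)"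
      by (rule gB)
    have e4: "(\<Sum>k<N. \<Sum>j<N. cf4 N k j * (\<Sum>i<N. S0 {#} {FPsi i 0, FPhi k 1} v)) = (\<Sum>k<N. \<Sum>j<N. (\<Sum>j'<N. cf4 N k j') * S0 {#} {FPsi j 0, FPhi k 1} v)"
      by (rule gA)
    have e5: "(\<Sum>k<N. \<Sum>j<N. cf4 N k j / 2 * (\<Sum>n<N. S0 {#BA n 1#} {} v)) = (\<Sum>k<N. \<Sum>j<N. (if j = k then (\<Sum>k'<N. \<Sum>j'<N. cf4 N k' j' / 2) * S0 {#BA k 1#} {} v else 0))"
      by (rule gC)
    have e6: "(\<Sum>k<N. \<Sum>j<N. - cf4 N k j / 2 * (\<Sum>n<N. \<Sum>n'<N. S0 {#BA n 0, BA n' 0#} {} v)) = (\<Sum>k<N. \<Sum>j<N. (\<Sum>k'<N. \<Sum>j'<N. - cf4 N k' j' / 2) * S0 {#BA k 0, BA j 0#} {} v)"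
      by (rule gD)
    have e7: "(\<Sum>k<N. \<Sum>j<N. cf5 N k j * (\<Sum>n<N. S0 {#BA n 0, BA j 0#} {} v)) = (\<Sum>k<N. \<Sum>j<N. (\<Sum>k'<N. cf5 N k' j) * S0 {#BA k 0, BA j 0#} {} v)"
      by (rule gB)
    have e8: "(\<Sum>k<N. \<Sum>j<N. cf6 N k j * (if k \<le> j then -1 else 1) * (\<Sum>n<N. S0 {#BA n 0#} {FPhi k 0, FPsi k 0} v)) = (\<Sum>k<N. \<Sum>j<N. (\<Sum>j'<N. cf6 N k j' * (if k \<le> j' then -1 else 1)) * S0 {#BA j 0#} {FPhi k 0, FPsi k 0} v)"
      by (rule gA[where c = "\<lambda>k j. cf6 N k j * (if k \<le> j then -1 else 1)"])
    show ?thesis by (simp only: e1 e2 e3 e4 e5 e6 e7 e8)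
  qed
  also have "\<dots> = (\<Sum>k<N. \<Sum>j<N. Gt N v k j)"
    unfolding Gt_def by (simp only: sum.distrib)
  finally show ?thesis .
qed


definition "Qm N v k j = cf6 N k j * (- ((if j < k then -1 else 1) * S0 {#} {FPhi j 1, FPsi k 0} v))
   + cf7 N k j * (- ((if j < k then -1 else 1) * S0 {#BA k 0#} {FPhi j 0, FPsi j 0} v))"

definition "Vk N v k j = (if j = k then S0 {#BB k 0, BA k 0#} {} v + S0 {#} {FPhi k 1, FPsi k 0} v else 0)"

lemma cf3': "cf3 N k j = (if j = k then (1 - sN N) / 2 else 0)" unfolding cf3_def using Ns[of N] by simp
lemma cf5': "cf5 N k j = sN N - (if j = k then (1 - sN N) / 2 else 0)" unfolding cf5_def using Ns[of N] by simp

lemma Gt_eq: assumes "k < N" "j < N" shows "Gt N v k j - Qm N v k j + Qm N v j k = Vk N v k j"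
proof -
  have e: "Gt N v k j = Es N v k j
  + (- sN N) * S0 {#BA k 0#} {FPsi j 0, FPhi k 0} v
  + (- sN N) * S0 {#BA j 0, BA k 0#} {} v
  + sN N * S0 {#BA k 0, BB j 0#} {} v
  + sN N * S0 {#} {FPsi j 0, FPhi k 1} v
  + (if j = k then (1 - sN N) / 2 * S0 {#BA k 1#} {} v else 0)
  + (- ((1 - sN N) / 2)) * S0 {#BA k 0, BA j 0#} {} v
  + (1 - sN N) / 2 * S0 {#BA k 0, BA j 0#} {} v
  + sN N * S0 {#BA j 0#} {FPhi k 0, FPsi k 0} v"
    unfolding Gt_def using assms by (simp only: sc2' sc4k' sc4j' sc4kj2 sc4kj2' sc5' sc6')
  consider "j < k" | "j = k" | "k < j" by linarith
  then show ?thesis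
  proof cases
    case 1
    then show ?thesis unfolding e Es_def Qm_def Vk_def cf1_def cf2_def cf3' cf6_def cf7_def
      by (simp add: insert_commute add_mset_commute algebra_simps)
  next
    case 2
    then show ?thesis unfolding e Es_def Qm_def Vk_def cf1_def cf2_def cf3' cf6_def cf7_def
      by (simp add: insert_commute add_mset_commute algebra_simps)
  next
    case 3
    then show ?thesis unfolding e Es_def Qm_def Vk_def cf1_def cf2_def cf3' cf6_def cf7_def
      by (simp add: insert_commute add_mset_commute algebra_simps)
  qed
qed

lemma vir_sum: "vl_vir N v = (\<Sum>k<N. \<Sum>j<N. Vk N v k j)"
  unfolding vl_vir_def Vk_def gz_def by simp

lemma dminus_vir: assumes "1 \<le> N" shows "vl_dminus N (yv N) v = vl_vir N v"
proof -
  have "vl_dminus N (yv N) v = (\<Sum>k<N. \<Sum>j<N. Gt N v k j)" using dminus_expand[OF assms] Em_Gt by simp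
  also have "\<dots> = (\<Sum>k<N. \<Sum>j<N. Gt N v k j - Qm N v k j + Qm N v j k)" by (rule swap_trick)
  also have "\<dots> = (\<Sum>k<N. \<Sum>j<N. Vk N v k j)"
    by (rule sum.cong[OF refl], rule sum.cong[OF refl]) (simp add: Gt_eq)
  also have "\<dots> = vl_vir N v" by (simp add: vir_sum)
  finally show ?thesis .
qed


lemma supp_yv: "yv N x \<noteq> 0 \<Longrightarrow> \<exists>t\<in>IT N. x = bx N t"
proof -
  assume "yv N x \<noteq> 0"
  then obtain t where "t \<in> IT N" "cf N t * vl_single (bx N t) x \<noteq> 0"
    unfolding yv_def by (auto elim: sum.not_neutral_contains_not_neutral)
  then show ?thesis by (auto simp: vl_single_def split: if_splits)
qed

lemma valid_bx: "t \<in> IT N \<Longrightarrow> vl_valid N (bx N t)"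
  by (cases t) (auto simp: IT_def bx_def b1_def b2_def b3_def b4_def b5_def b6_def b7_def vl_valid_def g0_def gz_def)

lemma fst_bx: "fst (fst (bx N t)) = g0 N"
  by (cases t) (simp add: bx_def fst_b)

lemma yv_in: "yv N \<in> VLgr N (int N)"
proof -
  have sub: "{x. yv N x \<noteq> 0} \<subseteq> bx N ` IT N" using supp_yv by blast
  have fin: "finite {x. yv N x \<noteq> 0}" by (rule finite_subset[OF sub]) (simp add: finite_IT)
  have val: "\<forall>x. yv N x \<noteq> 0 \<longrightarrow> vl_valid N x" using supp_yv valid_bx by blast
  have ht: "\<forall>x. yv N x \<noteq> 0 \<longrightarrow> int (vl_ht N (fst (fst x))) = int N"
    using supp_yv fst_bx ht_g0 by fastforce
  show ?thesis unfolding VLgr_def VL_def using fin val ht by blast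
qed

lemma zero_in: "(\<lambda>_. 0) \<in> VLgr N (-1)"
  unfolding VLgr_def VL_def by simp

lemma dplus_0: "vl_dplus N (\<lambda>_. 0) = (\<lambda>_. 0)"
  unfolding vl_dplus_def vl_Dq_def vl_lin_def by simp

theorem lemma2p6:
  fixes N :: nat
  assumes "N \<ge> 1"
  shows "\<exists>y\<in>VLgr N (int N). vl_dplus N y = (\<lambda>_. 0) \<and>
           (\<exists>w\<in>VLgr N (-1). (\<lambda>x. vl_dminus N y x - vl_vir N x) = vl_dplus N w)"
proof (intro bexI conjI)
  show "yv N \<in> VLgr N (int N)" by (rule yv_in)
  show "vl_dplus N (yv N) = (\<lambda>_. 0)" using dplus_zero[OF assms] by (intro ext) simp
  show "(\<lambda>_. 0) \<in> VLgr N (-1)" by (rule zero_in)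
  show "(\<lambda>x. vl_dminus N (yv N) x - vl_vir N x) = vl_dplus N (\<lambda>_. 0)"
    using dminus_vir[OF assms] by (simp add: dplus_0)
qed


end
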